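(* Let $T$ be a binary phylogenetic $X$-tree with $|X|\geq 4$ containing a cherry $[v,w]$. Let $e_v, e_w$ be the edges incident to the leaves $v$ and $w$, let $z'$ be the common neighbor of $v$ and $w$, let $z$ be the unique neighbor of $z'$ other than $v,w$ (a non-leaf vertex), and let $E_z$ be the set of the three edges incident with $z$. Let $x,y\notin X$ be distinct new labels. For $i=1,2$ let $e_i \in E(T)\setminus\{e_v,e_w\}$ and let $T_i$ be the binary phylogenetic $(X\cup\{x,y\})$-tree obtained from $T$ by attaching cherry $[x,y]$ to $e_i$; let $T_i^2$ be the binary phylogenetic $((X\setminus\{v,w\})\cup\{x,y\})$-tree obtained from $T_i$ by a cherry reduction of type 2 using $[v,w]$. Then $T_1^2 \cong T_2^2$ if and only if ($e_1=e_2$ or $e_1,e_2\in E_z$).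
   Context: A phylogenetic $X$-tree is a tree with no vertices of degree 2 whose leaves are bijectively labelled by (and identified with) $X$; binary means maximum degree 3; $\cong$ denotes isomorphism of graphs fixing all leaf labels. A cherry $[v,w]$ is a pair of leaves adjacent to the same vertex. Attaching cherry $[x,y]$ to an edge $e=\{p,q\}$: subdivide $e$ by a new vertex $u$ (replacing $e$ by $\{p,u\},\{u,q\}$), add a new vertex $c$ with edge $\{u,c\}$, and add new leaves $x,y$ with edges $\{c,x\},\{c,y\}$. Cherry reduction of type 2 using a cherry $[v,w]$ with common neighbor $z'$: delete $v$, $w$ and $z'$ (with incident edges), then suppress the resulting degree-2 vertex (replace it and its two incident edges by a single edge). *)

theory Defs
  imports Main
begin

text \<open>Finite simple undirected graphs given by a vertex set V and a set E of
  2-element edges. Leaves are identified with their labels (elements of 'a).\<close>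

definition simple_graph :: "'a set \<Rightarrow> 'a set set \<Rightarrow> bool" where
  "simple_graph V E \<longleftrightarrow> finite V \<and> (\<forall>e\<in>E. \<exists>a b. e = {a, b} \<and> a \<in> V \<and> b \<in> V \<and> a \<noteq> b)"

definition degree :: "'a set set \<Rightarrow> 'a \<Rightarrow> nat" where
  "degree E v = card {e\<in>E. v \<in> e}"

definition neighbors :: "'a set set \<Rightarrow> 'a \<Rightarrow> 'a set" where
  "neighbors E v = {u. {v, u} \<in> E \<and> u \<noteq> v}"

definition connected_graph :: "'a set \<Rightarrow> 'a set set \<Rightarrow> bool" where
  "connected_graph V E \<longleftrightarrow>
     (\<forall>a\<in>V. \<forall>b\<in>V. (a, b) \<in> {(p, q). {p, q} \<in> E}\<^sup>*)"

definition acyclic_graph :: "'a set set \<Rightarrow> bool" where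
  "acyclic_graph E \<longleftrightarrow>
     \<not> (\<exists>cs. length cs \<ge> 3 \<and> distinct cs \<and>
            (\<forall>i < length cs. {cs ! i, cs ! ((i + 1) mod length cs)} \<in> E))"

definition is_tree :: "'a set \<Rightarrow> 'a set set \<Rightarrow> bool" where
  "is_tree V E \<longleftrightarrow> simple_graph V E \<and> V \<noteq> {} \<and> connected_graph V E \<and> acyclic_graph E"

definition leaves :: "'a set \<Rightarrow> 'a set set \<Rightarrow> 'a set" where
  "leaves V E = {v\<in>V. degree E v \<le> 1}"

definition phylo_tree :: "'a set \<Rightarrow> 'a set \<Rightarrow> 'a set set \<Rightarrow> bool" where
  "phylo_tree X V E \<longleftrightarrow> is_tree V E \<and> leaves V E = X \<and> (\<forall>v\<in>V. degree E v \<noteq> 2)"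

definition binary_phylo_tree :: "'a set \<Rightarrow> 'a set \<Rightarrow> 'a set set \<Rightarrow> bool" where
  "binary_phylo_tree X V E \<longleftrightarrow> phylo_tree X V E \<and> (\<forall>v\<in>V. degree E v \<le> 3)"

definition tree_iso :: "'a set \<Rightarrow> 'a set \<Rightarrow> 'a set set \<Rightarrow> 'a set \<Rightarrow> 'a set set \<Rightarrow> bool" where
  "tree_iso L V1 E1 V2 E2 \<longleftrightarrow>
     (\<exists>f. bij_betw f V1 V2 \<and>
          (\<forall>a\<in>V1. \<forall>b\<in>V1. {a, b} \<in> E1 \<longleftrightarrow> {f a, f b} \<in> E2) \<and>
          (\<forall>l\<in>L. f l = l))"

text \<open>Attaching cherry [x,y] to edge e, with fresh subdivision vertex u and
  fresh cherry parent c.\<close>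
definition attach_cherry_V :: "'a set \<Rightarrow> 'a \<Rightarrow> 'a \<Rightarrow> 'a \<Rightarrow> 'a \<Rightarrow> 'a set" where
  "attach_cherry_V V u c x y = V \<union> {u, c, x, y}"

definition attach_cherry_E :: "'a set set \<Rightarrow> 'a set \<Rightarrow> 'a \<Rightarrow> 'a \<Rightarrow> 'a \<Rightarrow> 'a \<Rightarrow> 'a set set" where
  "attach_cherry_E E e u c x y =
     (E - {e}) \<union> {{p, u} | p. p \<in> e} \<union> {{u, c}, {c, x}, {c, y}}"

text \<open>Cherry reduction of type 2 using the cherry [v,w] of (V,E), producing (V',E'):
  delete v, w and their common neighbour z' (with incident edges), then suppress the
  resulting degree-2 vertex s (the third neighbour of z') with neighbours a, b.\<close>
definition cherry_reduction2 ::
  "'a set \<Rightarrow> 'a set set \<Rightarrow> 'a \<Rightarrow> 'a \<Rightarrow> 'a set \<Rightarrow> 'a set set \<Rightarrow> bool" where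
  "cherry_reduction2 V E v w V' E' \<longleftrightarrow>
     (\<exists>z' s a b.
        v \<noteq> w \<and> v \<in> leaves V E \<and> w \<in> leaves V E \<and>
        {v, z'} \<in> E \<and> {w, z'} \<in> E \<and> {z', s} \<in> E \<and> s \<notin> {v, w} \<and>
        (let V0 = V - {v, w, z'}; E0 = {e\<in>E. e \<inter> {v, w, z'} = {}} in
          s \<in> V0 \<and> degree E0 s = 2 \<and> neighbors E0 s = {a, b} \<and> a \<noteq> b \<and>
          V' = V0 - {s} \<and> E' = (E0 - {{a, s}, {s, b}}) \<union> {{a, b}}))"

end

theory Submission
  imports Defs "HOL-Library.Transitive_Closure_Table"
begin

definition adj :: "'a set set \<Rightarrow> ('a \<times> 'a) set" where
  "adj F = {(p, q). {p, q} \<in> F}"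

definition reach :: "'a set set \<Rightarrow> 'a \<Rightarrow> 'a set" where
  "reach F s = {y. (s, y) \<in> (adj F)\<^sup>*}"

definition bridges :: "'a set set \<Rightarrow> bool" where
  "bridges F \<longleftrightarrow> (\<forall>a b. {a, b} \<in> F \<longrightarrow> (a, b) \<notin> (adj (F - {{a, b}}))\<^sup>*)"

definition wfe :: "'a set \<Rightarrow> 'a set set \<Rightarrow> bool" where
  "wfe W H \<longleftrightarrow> (\<forall>e\<in>H. \<exists>p q. e = {p, q} \<and> p \<in> W \<and> q \<in> W \<and> p \<noteq> q)"

lemma adj_iff[simp]: "(p, q) \<in> adj F \<longleftrightarrow> {p, q} \<in> F"
  by (simp add: adj_def)

lemma adj_sym: "(a, b) \<in> (adj F)\<^sup>* \<Longrightarrow> (b, a) \<in> (adj F)\<^sup>*"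
proof (induction rule: rtrancl_induct)
  case base then show ?case by simp
next
  case (step y z)
  then have "(z, y) \<in> adj F" by (simp add: insert_commute)
  then show ?case using step(3) by (rule converse_rtrancl_into_rtrancl)
qed

lemma adj_mono: "F \<subseteq> G \<Longrightarrow> (a, b) \<in> (adj F)\<^sup>* \<Longrightarrow> (a, b) \<in> (adj G)\<^sup>*"
proof -
  assume "F \<subseteq> G"
  then have "adj F \<subseteq> adj G" by (auto simp: adj_def)
  then show "(a, b) \<in> (adj F)\<^sup>* \<Longrightarrow> (a, b) \<in> (adj G)\<^sup>*" using rtrancl_mono by blast
qed

lemma rt_restrict:
  assumes "(a, b) \<in> R\<^sup>*"
    and "\<And>p q. (a, p) \<in> R\<^sup>* \<Longrightarrow> (p, q) \<in> R \<Longrightarrow> (p, q) \<in> R'"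
  shows "(a, b) \<in> R'\<^sup>*"
  using assms(1)
proof (induction rule: rtrancl_induct)
  case base then show ?case by simp
next
  case (step y z)
  then show ?case using assms(2) by (meson rtrancl.rtrancl_into_rtrancl)
qed

lemma rt_sim:
  assumes "(a, b) \<in> R\<^sup>*"
    and "\<And>p q. (p, q) \<in> R \<Longrightarrow> (g p, g q) \<in> R'\<^sup>*"
  shows "(g a, g b) \<in> R'\<^sup>*"
  using assms(1)
proof (induction rule: rtrancl_induct)
  case base then show ?case by simp
next
  case (step y z)
  then show ?case using assms(2) by (meson rtrancl_trans)
qed

lemma rt_sim_on:
  assumes "(a, b) \<in> R\<^sup>*"
    and "\<And>p q. (a, p) \<in> R\<^sup>* \<Longrightarrow> (p, q) \<in> R \<Longrightarrow> (g p, g q) \<in> R'\<^sup>*"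
  shows "(g a, g b) \<in> R'\<^sup>*"
  using assms(1)
proof (induction rule: rtrancl_induct)
  case base then show ?case by simp
next
  case (step y z)
  then show ?case using assms(2) by (meson rtrancl_trans)
qed

lemma path_nth:
  "rtrancl_path r x xs y \<Longrightarrow> i < length xs \<Longrightarrow> r ((x # xs) ! i) (xs ! i)"
proof (induction arbitrary: i rule: rtrancl_path.induct)
  case (base x) then show ?case by simp
next
  case (step x y ys z)
  then show ?case by (cases i) auto
qed

lemma path_last: "rtrancl_path r x xs y \<Longrightarrow> xs \<noteq> [] \<Longrightarrow> last xs = y"
  by (induction rule: rtrancl_path.induct) (auto elim: rtrancl_path.cases)

lemma path_nil: "rtrancl_path r x [] y \<Longrightarrow> x = y"
  by (auto elim: rtrancl_path.cases)

lemma acyclic_bridges: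
  assumes ac: "acyclic_graph E" and ab: "{a, b} \<in> E" "a \<noteq> b"
  shows "(a, b) \<notin> (adj (E - {{a, b}}))\<^sup>*"
proof
  let ?F = "E - {{a, b}}"
  let ?r = "\<lambda>p q. (p, q) \<in> adj ?F"
  assume "(a, b) \<in> (adj ?F)\<^sup>*"
  then have "?r\<^sup>*\<^sup>* a b" by (simp add: rtrancl_def)
  then obtain xs where "rtrancl_path ?r a xs b" using rtranclp_eq_rtrancl_path by metis
  then obtain ys where P: "rtrancl_path ?r a ys b" and D: "distinct (a # ys)"
    using rtrancl_path_distinct by metis
  have ne: "ys \<noteq> []" using P ab(2) path_nil by fastforce
  have lst: "last ys = b" using path_last[OF P ne] .
  show False
  proof (cases "length ys = 1")
    case True
    then obtain c where "ys = [c]" by (cases ys) auto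
    with lst P have "?r a b" using path_nth[OF P, of 0] by simp
    then show False by simp
  next
    case False
    with ne have L: "length ys \<ge> 2" by (cases ys) (auto simp: Suc_le_eq)
    let ?cs = "a # ys"
    have "\<forall>i < length ?cs. {?cs ! i, ?cs ! ((i + 1) mod length ?cs)} \<in> E"
    proof (intro allI impI)
      fix i assume i: "i < length ?cs"
      show "{?cs ! i, ?cs ! ((i + 1) mod length ?cs)} \<in> E"
      proof (cases "i < length ys")
        case True
        then have "?r (?cs ! i) (ys ! i)" using path_nth[OF P] by blast
        moreover have "(i + 1) mod length ?cs = i + 1" using True by simp
        ultimately show ?thesis by simp
      next
        case False
        then have "i = length ys" using i by simp
        then have "?cs ! i = b" "(i + 1) mod length ?cs = 0"
          using lst ne by (auto simp: last_conv_nth)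
        then show ?thesis using ab by (simp add: insert_commute)
      qed
    qed
    moreover have "length ?cs \<ge> 3" using L by simp
    ultimately show False using ac D unfolding acyclic_graph_def by blast
  qed
qed


lemma wfe_finite: "finite W \<Longrightarrow> wfe W H \<Longrightarrow> finite H"
proof -
  assume "finite W" "wfe W H"
  then have "H \<subseteq> Pow W" unfolding wfe_def by auto
  then show "finite H" using \<open>finite W\<close> finite_subset by blast
qed

lemma wfe_edge: "wfe W H \<Longrightarrow> {p, q} \<in> H \<Longrightarrow> p \<in> W \<and> q \<in> W \<and> p \<noteq> q"
  unfolding wfe_def by (metis doubleton_eq_iff insertI1)

lemma degree_nbrs:
  assumes "finite H" "wfe W H"
  shows "degree H t = card (neighbors H t)"
proof -
  have "{e\<in>H. t \<in> e} = (\<lambda>u. {t, u}) ` neighbors H t"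
  proof
    show "{e\<in>H. t \<in> e} \<subseteq> (\<lambda>u. {t, u}) ` neighbors H t"
    proof
      fix e assume "e \<in> {e\<in>H. t \<in> e}"
      then have eH: "e \<in> H" "t \<in> e" by auto
      then obtain p q where e: "e = {p, q}" "p \<noteq> q" using assms(2) unfolding wfe_def by blast
      obtain r where r: "e = {t, r}" "r \<noteq> t"
      proof (cases "t = p")
        case True then show ?thesis using that e by simp
      next
        case False then have "t = q" using e eH by auto
        then show ?thesis using that[of p] e by (simp add: insert_commute)
      qed
      then have "r \<in> neighbors H t" using eH unfolding neighbors_def by simp
      then show "e \<in> (\<lambda>u. {t, u}) ` neighbors H t" using r(1) by (rule rev_image_eqI)
    qed
    show "(\<lambda>u. {t, u}) ` neighbors H t \<subseteq> {e\<in>H. t \<in> e}"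
      unfolding neighbors_def by blast
  qed
  moreover have "inj_on (\<lambda>u. {t, u}) (neighbors H t)"
    unfolding inj_on_def neighbors_def by (metis doubleton_eq_iff)
  ultimately show ?thesis unfolding degree_def by (simp add: card_image)
qed

lemma bridgeD: "bridges F \<Longrightarrow> {a, b} \<in> F \<Longrightarrow> (a, b) \<notin> (adj (F - {{a, b}}))\<^sup>*"
  by (simp add: bridges_def)

lemma reach_sub: "wfe W H \<Longrightarrow> F \<subseteq> H \<Longrightarrow> s \<in> W \<Longrightarrow> reach F s \<subseteq> W"
proof
  fix y assume A: "wfe W H" "F \<subseteq> H" "s \<in> W" "y \<in> reach F s"
  then have "(s, y) \<in> (adj F)\<^sup>*" by (simp add: reach_def)
  then show "y \<in> W"
  proof (induction rule: rtrancl_induct)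
    case base then show ?case using A by simp
  next
    case (step y z) then show ?case using A wfe_edge by fastforce
  qed
qed

lemma endpoint_out:
  assumes "bridges H" "{b, t} \<in> H"
  shows "b \<notin> reach (H - {{b, t}}) t"
proof
  assume "b \<in> reach (H - {{b, t}}) t"
  then have "(b, t) \<in> (adj (H - {{b, t}}))\<^sup>*" by (simp add: reach_def adj_sym)
  then show False using assms unfolding bridges_def by blast
qed

lemma reach_avoid:
  assumes "\<alpha> \<in> e2" "\<alpha> \<notin> reach (H - {e1}) s" "y \<in> reach (H - {e1}) s"
  shows "y \<in> reach (H - {e2}) s"
proof -
  have "(s, y) \<in> (adj (H - {e2}))\<^sup>*"
  proof (rule rt_restrict[of s y "adj (H - {e1})"])
    show "(s, y) \<in> (adj (H - {e1}))\<^sup>*" using assms(3) by (simp add: reach_def)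
  next
    fix p q assume p: "(s, p) \<in> (adj (H - {e1}))\<^sup>*" and pq: "(p, q) \<in> adj (H - {e1})"
    then have q: "(s, q) \<in> (adj (H - {e1}))\<^sup>*" by (meson rtrancl.rtrancl_into_rtrancl)
    have "{p, q} \<noteq> e2"
    proof
      assume "{p, q} = e2"
      then have "\<alpha> = p \<or> \<alpha> = q" using assms(1) by auto
      then show False using p q assms(2) by (auto simp: reach_def)
    qed
    then show "(p, q) \<in> adj (H - {e2})" using pq by simp
  qed
  then show ?thesis by (simp add: reach_def)
qed

lemma reach_refl[simp]: "s \<in> reach F s"
  by (simp add: reach_def)

lemma reach_step: "y \<in> reach F s \<Longrightarrow> {y, z} \<in> F \<Longrightarrow> z \<in> reach F s"
  by (auto simp: reach_def intro: rtrancl_into_rtrancl)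

lemma reach_trans: "y \<in> reach F s \<Longrightarrow> z \<in> reach F y \<Longrightarrow> z \<in> reach F s"
  by (auto simp: reach_def intro: rtrancl_trans)

lemma reach_sym: "y \<in> reach F s \<Longrightarrow> s \<in> reach F y"
  by (auto simp: reach_def intro: adj_sym)

lemma side_sub:
  assumes br: "bridges H" and e: "{b, t} \<in> H" "{t, t'} \<in> H" "t' \<noteq> b" "t \<noteq> t'" "b \<noteq> t"
  shows "reach (H - {{t, t'}}) t' \<subseteq> reach (H - {{b, t}}) t"
proof
  fix y assume y: "y \<in> reach (H - {{t, t'}}) t'"
  have "t \<notin> reach (H - {{t, t'}}) t'" using endpoint_out[OF br e(2)] .
  then have 1: "y \<in> reach (H - {{b, t}}) t'" using reach_avoid[of t "{b,t}" H "{t,t'}" t' y] y by simp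
  have "{t, t'} \<noteq> {b, t}" using e(3,5) by (simp add: doubleton_eq_iff)
  then have "{t, t'} \<in> H - {{b, t}}" using e(2) by simp
  then have 2: "t' \<in> reach (H - {{b, t}}) t" by (rule reach_step[OF reach_refl])
  show "y \<in> reach (H - {{b, t}}) t" by (rule reach_trans[OF 2 1])
qed

lemma side_leaf:
  assumes W: "finite W" "wfe W H" and br: "bridges H"
  shows "{b, t} \<in> H \<Longrightarrow> \<exists>l\<in>reach (H - {{b, t}}) t. degree H l \<le> 1"
proof (induction "card (reach (H - {{b, t}}) t)" arbitrary: b t rule: less_induct)
  case less
  have tW: "t \<in> W" "b \<noteq> t" using wfe_edge[OF W(2) less.prems] by auto
  have "reach (H - {{b, t}}) t \<subseteq> W" by (rule reach_sub[OF W(2)]) (use tW in auto)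
  then have finD: "finite (reach (H - {{b, t}}) t)" using W(1) by (rule finite_subset)
  show ?case
  proof (cases "degree H t \<le> 1")
    case True then show ?thesis by (rule bexI[OF _ reach_refl])
  next
    case False
    have finH: "finite H" using wfe_finite W by blast
    have "\<exists>e\<in>H. t \<in> e \<and> e \<noteq> {b, t}"
    proof (rule ccontr)
      assume "\<not> ?thesis"
      then have "{e\<in>H. t \<in> e} \<subseteq> {{b, t}}" by blast
      then have "card {e\<in>H. t \<in> e} \<le> card {{b, t}}" by (rule card_mono[rotated]) simp
      then have "card {e\<in>H. t \<in> e} \<le> 1" by simp
      then show False using False unfolding degree_def by simp
    qed
    then obtain e where e: "e \<in> H" "t \<in> e" "e \<noteq> {b, t}" by blast
    obtain p q where pq: "e = {p, q}" "p \<noteq> q" using W(2) e(1) unfolding wfe_def by blast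
    obtain t' where t': "e = {t, t'}" "t \<noteq> t'"
    proof (cases "t = p")
      case True then show ?thesis using that[of q] pq by simp
    next
      case False then have "t = q" using pq e(2) by auto
      then show ?thesis using that[of p] pq by (simp add: insert_commute)
    qed
    have tb: "t' \<noteq> b"
    proof
      assume "t' = b"
      have "{t, b} = {b, t}" by (rule insert_commute)
      then show False using t'(1) e(3) \<open>t' = b\<close> by simp
    qed
    have eH: "{t, t'} \<in> H" using e(1) t'(1) by simp
    have sub: "reach (H - {{t, t'}}) t' \<subseteq> reach (H - {{b, t}}) t"
      by (rule side_sub[OF br less.prems eH tb t'(2) tW(2)])
    have "t \<notin> reach (H - {{t, t'}}) t'" by (rule endpoint_out[OF br eH])
    moreover have "t \<in> reach (H - {{b, t}}) t" by simp
    ultimately have "reach (H - {{t, t'}}) t' \<subset> reach (H - {{b, t}}) t" using sub by blast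
    then have cl: "card (reach (H - {{t, t'}}) t') < card (reach (H - {{b, t}}) t)"
      by (rule psubset_card_mono[OF finD])
    have "\<exists>l\<in>reach (H - {{t, t'}}) t'. degree H l \<le> 1" by (rule less.hyps[OF cl eH])
    then obtain l where l: "l \<in> reach (H - {{t, t'}}) t'" "degree H l \<le> 1" ..
    have "l \<in> reach (H - {{b, t}}) t" using sub l(1) by (rule subsetD)
    then show ?thesis using l(2) by (rule bexI[rotated])
  qed
qed

lemma sides_disjoint:
  assumes br: "bridges H" and e: "{b, t1} \<in> H" "{b, t2} \<in> H" "t1 \<noteq> t2" "b \<noteq> t1" "b \<noteq> t2"
  shows "reach (H - {{b, t1}}) t1 \<inter> reach (H - {{b, t2}}) t2 = {}"
proof (rule ccontr)
  assume "\<not> ?thesis"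
  then obtain s where s1: "s \<in> reach (H - {{b, t1}}) t1" and s2: "s \<in> reach (H - {{b, t2}}) t2" by blast
  have "b \<notin> reach (H - {{b, t2}}) t2" using endpoint_out[OF br e(2)] .
  then have "s \<in> reach (H - {{b, t1}}) t2" using reach_avoid[of b "{b,t1}" H "{b,t2}" t2 s] s2 by simp
  then have "t2 \<in> reach (H - {{b, t1}}) s" by (rule reach_sym)
  then have 1: "t2 \<in> reach (H - {{b, t1}}) t1" by (rule reach_trans[OF s1])
  have "{t2, b} \<noteq> {b, t1}" using e(3,4) by (simp add: doubleton_eq_iff)
  then have "{t2, b} \<in> H - {{b, t1}}" using e(2) by (simp add: insert_commute)
  then have "b \<in> reach (H - {{b, t1}}) t1" by (rule reach_step[OF 1])
  then show False using endpoint_out[OF br e(1)] by simp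
qed

lemma conn_split:
  assumes "(a, y) \<in> (adj H)\<^sup>*" "{a, b} \<in> H"
  shows "y \<in> reach (H - {{a, b}}) a \<or> y \<in> reach (H - {{a, b}}) b"
  using assms(1)
proof (induction rule: rtrancl_induct)
  case base then show ?case by simp
next
  case (step y z)
  show ?case
  proof (cases "{y, z} = {a, b}")
    case True then have "z = a \<or> z = b" by (auto simp: doubleton_eq_iff)
    then show ?thesis by auto
  next
    case False
    then have "{y, z} \<in> H - {{a, b}}" using step by simp
    then show ?thesis using step reach_step by metis
  qed
qed


lemma bridge_sep:
  assumes "bridges H" "{a, b} \<in> H" "x \<in> reach (H - {{a, b}}) a" "x \<in> reach (H - {{a, b}}) b"
  shows False
proof -
  have "b \<in> reach (H - {{a, b}}) x" using assms(4) by (rule reach_sym)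
  then have "b \<in> reach (H - {{a, b}}) a" using assms(3) reach_trans by metis
  then have "(a, b) \<in> (adj (H - {{a, b}}))\<^sup>*" by (simp add: reach_def)
  then show False using assms(1,2) unfolding bridges_def by auto
qed

lemma reach_isolated:
  assumes "\<And>y. {s, y} \<notin> F"
  shows "reach F s = {s}"
proof -
  have "y = s" if "(s, y) \<in> (adj F)\<^sup>*" for y
    using that
  proof (induction rule: rtrancl_induct)
    case base then show ?case by simp
  next
    case (step x z) then show ?case using assms[of z] by auto
  qed
  then show ?thesis by (auto simp: reach_def)
qed

lemma two_elems:
  assumes "finite S" "card S \<ge> 2"
  obtains x y where "x \<in> S" "y \<in> S" "x \<noteq> y"
proof -
  have "S \<noteq> {}" using assms by auto
  then obtain x where x: "x \<in> S" by auto
  have "card (S - {x}) \<ge> 1" using assms x by (simp add: card_Diff_singleton)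
  then have "S - {x} \<noteq> {}" by (metis card.empty not_one_le_zero)
  then obtain y where "y \<in> S - {x}" by auto
  then show ?thesis using that x by auto
qed

lemma core_t:
  assumes W: "finite W" "wfe W H" and br: "bridges H"
    and h1: "{a, b} \<in> H" and h2: "{a', b'} \<in> H"
    and l1: "l1 \<in> reach (H - {{a, b}}) b" "l1 \<in> reach (H - {{a', b'}}) b'"
    and bC: "b \<in> reach (H - {{a', b'}}) a'"
    and t: "{b, t} \<in> H" "t \<noteq> a" "t \<noteq> b" "b' \<notin> reach (H - {{b, t}}) t"
  shows "\<exists>l2. degree H l2 \<le> 1 \<and> l2 \<in> W \<and> l2 \<in> reach (H - {{a, b}}) l1 \<and> l2 \<notin> reach (H - {{a', b'}}) l1"
proof -
  obtain l3 where l3: "l3 \<in> reach (H - {{b, t}}) t" "degree H l3 \<le> 1"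
    using side_leaf[OF W br t(1)] by (elim bexE)
  have tW: "t \<in> W" using wfe_edge[OF W(2) t(1)] by simp
  have "reach (H - {{b, t}}) t \<subseteq> W" by (rule reach_sub[OF W(2) _ tW]) auto
  then have l3W: "l3 \<in> W" using l3(1) by (rule subsetD)
  have bout: "b \<notin> reach (H - {{b, t}}) t" by (rule endpoint_out[OF br t(1)])
  have 1: "l3 \<in> reach (H - {{a, b}}) t"
    by (rule reach_avoid[of b "{a,b}" H "{b,t}" t l3]) (use bout l3 in simp_all)
  have "{b, t} \<noteq> {a, b}" using t(2,3) by (simp add: doubleton_eq_iff)
  then have "{b, t} \<in> H - {{a, b}}" using t(1) by simp
  then have "t \<in> reach (H - {{a, b}}) b" by (rule reach_step[OF reach_refl])
  then have l3b: "l3 \<in> reach (H - {{a, b}}) b" using 1 by (rule reach_trans)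
  have 2: "l3 \<in> reach (H - {{a', b'}}) t"
    by (rule reach_avoid[of b' "{a',b'}" H "{b,t}" t l3]) (use t(4) l3 in simp_all)
  have "b' \<noteq> t" using t(4) by auto
  moreover have "b' \<noteq> b"
  proof
    assume "b' = b"
    then have "b \<in> reach (H - {{a', b'}}) b'" by simp
    then show False using bridge_sep[OF br h2 bC] by simp
  qed
  ultimately have "{b, t} \<noteq> {a', b'}" by (auto simp: doubleton_eq_iff)
  then have "{b, t} \<in> H - {{a', b'}}" using t(1) by simp
  then have "t \<in> reach (H - {{a', b'}}) b" by (rule reach_step[OF reach_refl])
  then have "t \<in> reach (H - {{a', b'}}) a'" using bC reach_trans by metis
  then have l3a: "l3 \<in> reach (H - {{a', b'}}) a'" using 2 by (rule reach_trans)
  have "l3 \<in> reach (H - {{a, b}}) l1" using l1(1) l3b by (meson reach_sym reach_trans)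
  moreover have "l3 \<notin> reach (H - {{a', b'}}) l1"
  proof
    assume "l3 \<in> reach (H - {{a', b'}}) l1"
    then have "l1 \<in> reach (H - {{a', b'}}) a'" using l3a by (meson reach_sym reach_trans)
    then show False using bridge_sep[OF br h2] l1(2) by blast
  qed
  ultimately show ?thesis using l3(2) l3W by (intro exI[of _ l3]) simp
qed

lemma core0:
  assumes W: "finite W" "wfe W H" and br: "bridges H" and nd2: "\<forall>t\<in>W. degree H t \<noteq> 2"
    and h1: "{a, b} \<in> H" and h2: "{a', b'} \<in> H" and ne: "{a, b} \<noteq> {a', b'}"
    and a'C: "a' \<in> reach (H - {{a, b}}) b" and b'C: "b' \<in> reach (H - {{a, b}}) b"
    and aC: "a \<in> reach (H - {{a', b'}}) a'" and bC: "b \<in> reach (H - {{a', b'}}) a'"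
  shows "\<exists>l1 l2. degree H l1 \<le> 1 \<and> l1 \<in> W \<and> degree H l2 \<le> 1 \<and> l2 \<in> W \<and>
           l2 \<in> reach (H - {{a, b}}) l1 \<and> l2 \<notin> reach (H - {{a', b'}}) l1"
proof -
  have finH: "finite H" using wfe_finite W by blast
  obtain l1 where l1: "l1 \<in> reach (H - {{a', b'}}) b'" "degree H l1 \<le> 1"
    using side_leaf[OF W br h2] by (elim bexE)
  have b'W: "b' \<in> W" and a'b': "a' \<noteq> b'" using wfe_edge[OF W(2) h2] by auto
  have "reach (H - {{a', b'}}) b' \<subseteq> W" by (rule reach_sub[OF W(2) _ b'W]) auto
  then have l1W: "l1 \<in> W" using l1(1) by (rule subsetD)
  have aout: "a \<notin> reach (H - {{a', b'}}) b'"
  proof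
    assume "a \<in> reach (H - {{a', b'}}) b'"
    then show False using bridge_sep[OF br h2 aC] by simp
  qed
  have "l1 \<in> reach (H - {{a, b}}) b'"
    by (rule reach_avoid[of a "{a,b}" H "{a',b'}" b' l1]) (use aout l1 in simp_all)
  then have l1C: "l1 \<in> reach (H - {{a, b}}) b" using b'C reach_trans by metis
  have bW: "b \<in> W" and ab: "a \<noteq> b" using wfe_edge[OF W(2) h1] by auto
  have dg: "degree H b \<ge> 3"
  proof (rule ccontr)
    assume "\<not> degree H b \<ge> 3"
    then have "degree H b \<le> 1" using nd2 bW by force
    have "{b, y} \<notin> H - {{a, b}}" for y
    proof
      assume y: "{b, y} \<in> H - {{a, b}}"
      have "{{a, b}, {b, y}} \<subseteq> {e\<in>H. b \<in> e}" using y h1 by auto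
      then have "card {{a, b}, {b, y}} \<le> card {e\<in>H. b \<in> e}"
        by (rule card_mono[rotated]) (use finH in simp)
      moreover have "{b, y} \<noteq> {a, b}" using y by simp
      then have "card {{a, b}, {b, y}} = 2" by simp
      ultimately show False using \<open>degree H b \<le> 1\<close> unfolding degree_def by simp
    qed
    then have "reach (H - {{a, b}}) b = {b}" by (rule reach_isolated)
    then show False using a'C b'C a'b' by simp
  qed
  then have cN: "card (neighbors H b) \<ge> 3" using degree_nbrs[OF finH W(2)] by simp
  have NW: "neighbors H b \<subseteq> W"
  proof
    fix y assume "y \<in> neighbors H b"
    then have "{b, y} \<in> H" by (simp add: neighbors_def)
    then show "y \<in> W" using wfe_edge[OF W(2)] by simp
  qed
  have finN: "finite (neighbors H b)" using NW W(1) by (rule finite_subset)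
  have "card (neighbors H b) - 1 \<le> card (neighbors H b - {a})"
    by (cases "a \<in> neighbors H b") (simp_all add: card_Diff_singleton finN)
  then have c2: "card (neighbors H b - {a}) \<ge> 2" using cN by linarith
  have fin2: "finite (neighbors H b - {a})" using finN by simp
  obtain t1 t2 where t12: "t1 \<in> neighbors H b - {a}" "t2 \<in> neighbors H b - {a}" "t1 \<noteq> t2"
    by (rule two_elems[OF fin2 c2])
  have e1: "{b, t1} \<in> H" "t1 \<noteq> b" "t1 \<noteq> a" and e2: "{b, t2} \<in> H" "t2 \<noteq> b" "t2 \<noteq> a"
    using t12 unfolding neighbors_def by auto
  have disj: "reach (H - {{b, t1}}) t1 \<inter> reach (H - {{b, t2}}) t2 = {}"
    by (rule sides_disjoint[OF br e1(1) e2(1) t12(3)]) (use e1 e2 in auto)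
  have "\<exists>t. {b, t} \<in> H \<and> t \<noteq> a \<and> t \<noteq> b \<and> b' \<notin> reach (H - {{b, t}}) t"
  proof (cases "b' \<in> reach (H - {{b, t1}}) t1")
    case True
    then have "b' \<notin> reach (H - {{b, t2}}) t2" using disj by auto
    then show ?thesis using e2 by (intro exI[of _ t2]) simp
  next
    case False then show ?thesis using e1 by (intro exI[of _ t1]) simp
  qed
  then obtain t where t: "{b, t} \<in> H" "t \<noteq> a" "t \<noteq> b" "b' \<notin> reach (H - {{b, t}}) t" by (elim exE conjE) simp
  obtain l2 where "degree H l2 \<le> 1 \<and> l2 \<in> W \<and> l2 \<in> reach (H - {{a, b}}) l1 \<and> l2 \<notin> reach (H - {{a', b'}}) l1"
    using core_t[OF W br h1 h2 l1C l1(1) bC t] by (elim exE)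
  then show ?thesis using l1(2) l1W by (intro exI[of _ l1] exI[of _ l2]) simp
qed

lemma orient:
  assumes conn: "\<forall>p\<in>W. \<forall>q\<in>W. (p, q) \<in> (adj H)\<^sup>*" and W: "wfe W H"
    and h1: "{a, b} \<in> H" and h2: "{a', b'} \<in> H" and ne: "{a, b} \<noteq> {a', b'}"
  shows "\<exists>\<alpha> \<beta>. {\<alpha>, \<beta>} = {a, b} \<and> a' \<in> reach (H - {{a, b}}) \<beta> \<and> b' \<in> reach (H - {{a, b}}) \<beta>"
proof -
  have aW: "a \<in> W" and a'W: "a' \<in> W" using wfe_edge[OF W h1] wfe_edge[OF W h2] by auto
  have "a' \<in> reach (H - {{a, b}}) a \<or> a' \<in> reach (H - {{a, b}}) b"
    by (rule conn_split) (use conn aW a'W h1 in auto)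
  moreover have "{a', b'} \<in> H - {{a, b}}" using h2 ne by simp
  ultimately have "(a' \<in> reach (H - {{a, b}}) a \<and> b' \<in> reach (H - {{a, b}}) a) \<or>
                   (a' \<in> reach (H - {{a, b}}) b \<and> b' \<in> reach (H - {{a, b}}) b)"
    using reach_step by metis
  then show ?thesis
  proof
    assume "a' \<in> reach (H - {{a, b}}) a \<and> b' \<in> reach (H - {{a, b}}) a"
    moreover have "{b, a} = {a, b}" by (rule insert_commute)
    ultimately show ?thesis by (intro exI[of _ b] exI[of _ a]) simp
  next
    assume "a' \<in> reach (H - {{a, b}}) b \<and> b' \<in> reach (H - {{a, b}}) b"
    then show ?thesis by (intro exI[of _ a] exI[of _ b]) simp
  qed
qed

lemma core:
  assumes W: "finite W" "wfe W H" and br: "bridges H" and nd2: "\<forall>t\<in>W. degree H t \<noteq> 2"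
    and conn: "\<forall>p\<in>W. \<forall>q\<in>W. (p, q) \<in> (adj H)\<^sup>*"
    and h1: "h1 \<in> H" and h2: "h2 \<in> H" and ne: "h1 \<noteq> h2"
  shows "\<exists>l1 l2. degree H l1 \<le> 1 \<and> l1 \<in> W \<and> degree H l2 \<le> 1 \<and> l2 \<in> W \<and>
           (l2 \<in> reach (H - {h1}) l1) \<noteq> (l2 \<in> reach (H - {h2}) l1)"
proof -
  obtain a b where ab: "h1 = {a, b}" using W(2) h1 unfolding wfe_def by blast
  obtain a' b' where ab': "h2 = {a', b'}" using W(2) h2 unfolding wfe_def by blast
  have "\<exists>\<alpha> \<beta>. {\<alpha>, \<beta>} = {a, b} \<and> a' \<in> reach (H - {{a, b}}) \<beta> \<and> b' \<in> reach (H - {{a, b}}) \<beta>"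
    by (rule orient[OF conn W(2)]) (use h1 h2 ne ab ab' in simp_all)
  then obtain \<alpha> \<beta> where o1: "{\<alpha>, \<beta>} = h1" "a' \<in> reach (H - {h1}) \<beta>" "b' \<in> reach (H - {h1}) \<beta>"
    using ab by auto
  have "\<exists>\<alpha>' \<beta>'. {\<alpha>', \<beta>'} = {a', b'} \<and> \<alpha> \<in> reach (H - {{a', b'}}) \<beta>' \<and> \<beta> \<in> reach (H - {{a', b'}}) \<beta>'"
    by (rule orient[OF conn W(2)]) (use h1 h2 ne ab ab' o1(1) in simp_all)
  then obtain \<alpha>' \<beta>' where o2: "{\<alpha>', \<beta>'} = h2" "\<alpha> \<in> reach (H - {h2}) \<beta>'" "\<beta> \<in> reach (H - {h2}) \<beta>'"
    using ab' by auto
  have "a' = \<alpha>' \<and> b' = \<beta>' \<or> a' = \<beta>' \<and> b' = \<alpha>'" using o2(1) ab' by (simp add: doubleton_eq_iff) blast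
  then have o1': "\<alpha>' \<in> reach (H - {h1}) \<beta>" "\<beta>' \<in> reach (H - {h1}) \<beta>" using o1 by auto
  have sw: "{\<beta>', \<alpha>'} = h2" using o2(1) by (simp add: insert_commute)
  have "\<exists>l1 l2. degree H l1 \<le> 1 \<and> l1 \<in> W \<and> degree H l2 \<le> 1 \<and> l2 \<in> W \<and>
           l2 \<in> reach (H - {{\<alpha>, \<beta>}}) l1 \<and> l2 \<notin> reach (H - {{\<beta>', \<alpha>'}}) l1"
  proof (rule core0[OF W br nd2])
    show "{\<alpha>, \<beta>} \<in> H" using o1(1) h1 by simp
    show "{\<beta>', \<alpha>'} \<in> H" using sw h2 by simp
    show "{\<alpha>, \<beta>} \<noteq> {\<beta>', \<alpha>'}" using o1(1) sw ne by simp
    show "\<beta>' \<in> reach (H - {{\<alpha>, \<beta>}}) \<beta>" "\<alpha>' \<in> reach (H - {{\<alpha>, \<beta>}}) \<beta>"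
      using o1' o1(1) by simp_all
    show "\<alpha> \<in> reach (H - {{\<beta>', \<alpha>'}}) \<beta>'" "\<beta> \<in> reach (H - {{\<beta>', \<alpha>'}}) \<beta>'"
      using o2 sw by simp_all
  qed
  then obtain l1 l2 where "degree H l1 \<le> 1 \<and> l1 \<in> W \<and> degree H l2 \<le> 1 \<and> l2 \<in> W \<and>
           l2 \<in> reach (H - {{\<alpha>, \<beta>}}) l1 \<and> l2 \<notin> reach (H - {{\<beta>', \<alpha>'}}) l1" by (elim exE)
  then have "degree H l1 \<le> 1 \<and> l1 \<in> W \<and> degree H l2 \<le> 1 \<and> l2 \<in> W \<and>
           l2 \<in> reach (H - {h1}) l1 \<and> l2 \<notin> reach (H - {h2}) l1" using o1(1) sw by simp
  then show ?thesis by (intro exI[of _ l1] exI[of _ l2]) simp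
qed


definition att_ok :: "'a set \<Rightarrow> 'a set set \<Rightarrow> 'a set \<Rightarrow> 'a \<Rightarrow> 'a \<Rightarrow> 'a \<Rightarrow> 'a \<Rightarrow> bool" where
  "att_ok W H h d c x y \<longleftrightarrow> wfe W H \<and> h \<in> H \<and> d \<notin> W \<and> c \<notin> W \<and> x \<notin> W \<and> y \<notin> W \<and>
     d \<noteq> c \<and> d \<noteq> x \<and> d \<noteq> y \<and> c \<noteq> x \<and> c \<noteq> y \<and> x \<noteq> y"

lemma AE_mem:
  assumes ok: "att_ok W H h d c x y"
  shows "{a, b} \<in> attach_cherry_E H h d c x y \<longleftrightarrow>
    {a, b} = {d, c} \<or> {a, b} = {c, x} \<or> {a, b} = {c, y} \<or>
    ({a, b} \<in> H \<and> {a, b} \<noteq> h) \<or> (a = d \<and> b \<in> h) \<or> (b = d \<and> a \<in> h)"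
proof -
  have hW: "h \<subseteq> W" using ok unfolding att_ok_def wfe_def by auto
  have dh: "d \<notin> h" using hW ok unfolding att_ok_def by auto
  have mid: "({a, b} \<in> {{p, d} |p. p \<in> h}) \<longleftrightarrow> (a = d \<and> b \<in> h) \<or> (b = d \<and> a \<in> h)"
  proof
    assume "{a, b} \<in> {{p, d} |p. p \<in> h}"
    then obtain p where p: "p \<in> h" "{a, b} = {p, d}" by auto
    then show "(a = d \<and> b \<in> h) \<or> (b = d \<and> a \<in> h)" by (auto simp: doubleton_eq_iff)
  next
    assume "(a = d \<and> b \<in> h) \<or> (b = d \<and> a \<in> h)"
    then show "{a, b} \<in> {{p, d} |p. p \<in> h}"
    proof
      assume A: "a = d \<and> b \<in> h"
      then have "{a, b} = {b, d}" by (simp add: insert_commute)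
      then show ?thesis using A by (intro CollectI exI[of _ b] conjI) simp_all
    next
      assume "b = d \<and> a \<in> h"
      then show ?thesis by (intro CollectI exI[of _ a] conjI) simp_all
    qed
  qed
  have "attach_cherry_E H h d c x y = (H - {h}) \<union> {{p, d} |p. p \<in> h} \<union> {{d, c}, {c, x}, {c, y}}"
    unfolding attach_cherry_E_def by (simp add: insert_commute)
  then show ?thesis using mid by simp
qed

lemma att_V: "attach_cherry_V W d c x y = W \<union> {d, c, x, y}"
  by (simp add: attach_cherry_V_def)


lemma AE_single:
  assumes ok: "att_ok W H h d c x y"
  shows "{a} \<notin> attach_cherry_E H h d c x y"
proof
  assume "{a} \<in> attach_cherry_E H h d c x y"
  then have "{a, a} \<in> attach_cherry_E H h d c x y" by simp
  moreover have "{a, a} \<notin> H" using wfe_edge[of W H a a] ok unfolding att_ok_def by auto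
  moreover have "d \<notin> h" using ok unfolding att_ok_def wfe_def by auto
  ultimately show False unfolding AE_mem[OF ok] using ok unfolding att_ok_def
    by (auto simp: doubleton_eq_iff)
qed

lemma att_iso_same:
  assumes ok1: "att_ok W H h d1 c1 x y" and ok2: "att_ok W H h d2 c2 x y" and L: "L \<subseteq> W \<union> {x, y}"
  shows "tree_iso L (attach_cherry_V W d1 c1 x y) (attach_cherry_E H h d1 c1 x y)
                    (attach_cherry_V W d2 c2 x y) (attach_cherry_E H h d2 c2 x y)"
proof -
  define f where "f t = (if t = d1 then d2 else if t = c1 then c2 else t)" for t
  have o1: "wfe W H" "h \<in> H" "d1 \<notin> W" "c1 \<notin> W" "x \<notin> W" "y \<notin> W" "d1 \<noteq> c1" "d1 \<noteq> x" "d1 \<noteq> y"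
    "c1 \<noteq> x" "c1 \<noteq> y" "x \<noteq> y" using ok1 unfolding att_ok_def by auto
  have o2: "d2 \<notin> W" "c2 \<notin> W" "d2 \<noteq> c2" "d2 \<noteq> x" "d2 \<noteq> y" "c2 \<noteq> x" "c2 \<noteq> y"
    using ok2 unfolding att_ok_def by auto
  have HW: "p \<in> W" "q \<in> W" if "{p, q} \<in> H" for p q using wfe_edge[OF o1(1) that] by auto
  have hW: "h \<subseteq> W" using o1(1,2) unfolding wfe_def by auto
  have fW: "f t = t" if "t \<in> W \<union> {x, y}" for t using that o1 unfolding f_def by auto
  have fd: "f d1 = d2" and fc: "f c1 = c2" using o1 unfolding f_def by auto
  have bij: "bij_betw f (attach_cherry_V W d1 c1 x y) (attach_cherry_V W d2 c2 x y)"
    unfolding bij_betw_def inj_on_def att_V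
  proof (intro conjI ballI impI)
    fix a b assume a: "a \<in> W \<union> {d1, c1, x, y}" and b: "b \<in> W \<union> {d1, c1, x, y}" and "f a = f b"
    then show "a = b" using o1 o2 unfolding f_def by (auto split: if_splits)
  next
    show "f ` (W \<union> {d1, c1, x, y}) = W \<union> {d2, c2, x, y}"
    proof
      show "f ` (W \<union> {d1, c1, x, y}) \<subseteq> W \<union> {d2, c2, x, y}" using fW fd fc by auto
      show "W \<union> {d2, c2, x, y} \<subseteq> f ` (W \<union> {d1, c1, x, y})"
      proof
        fix t assume t: "t \<in> W \<union> {d2, c2, x, y}"
        show "t \<in> f ` (W \<union> {d1, c1, x, y})"
        proof (cases "t = d2")
          case True then show ?thesis using fd by (intro rev_image_eqI[of d1]) auto
        next
          case False
          show ?thesis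
          proof (cases "t = c2")
            case True then show ?thesis using fc by (intro rev_image_eqI[of c1]) auto
          next
            case False
            then have "t \<in> W \<union> {x, y}" using t \<open>t \<noteq> d2\<close> by auto
            then show ?thesis using fW by (intro rev_image_eqI[of t]) auto
          qed
        qed
      qed
    qed
  qed
  have nH1: "{p, q} \<notin> H" if "p \<notin> W" for p q using HW that by blast
  have nH2: "{p, q} \<notin> H" if "q \<notin> W" for p q using HW that by blast
  have hn: "d1 \<notin> h" "c1 \<notin> h" "x \<notin> h" "y \<notin> h" "d2 \<notin> h" "c2 \<notin> h"
    using hW o1 o2 by auto
  have fW': "f t = t" if "t \<in> W" for t using fW that by auto
  have fx: "f x = x" "f y = y" using fW by auto
  have edges: "{a, b} \<in> attach_cherry_E H h d1 c1 x y \<longleftrightarrow> {f a, f b} \<in> attach_cherry_E H h d2 c2 x y"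
    if a: "a \<in> attach_cherry_V W d1 c1 x y" and b: "b \<in> attach_cherry_V W d1 c1 x y" for a b
  proof -
    have aa: "a \<in> W \<or> a = d1 \<or> a = c1 \<or> a = x \<or> a = y" using a by (auto simp: att_V)
    have bb: "b \<in> W \<or> b = d1 \<or> b = c1 \<or> b = x \<or> b = y" using b by (auto simp: att_V)
    from aa bb show ?thesis
      apply (elim disjE)
      apply (simp_all add: AE_mem[OF ok1] AE_mem[OF ok2] AE_single[OF ok1] AE_single[OF ok2]
          doubleton_eq_iff fW' fx fd fc nH1 nH2 hn o1 o2)
      using o1 o2 hn by auto
  qed
  have "\<forall>l\<in>L. f l = l" using L fW by auto
  then show ?thesis unfolding tree_iso_def using bij edges by blast
qed


lemma tree_iso_sym:
  assumes "tree_iso L V1 E1 V2 E2" "L \<subseteq> V1"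
  shows "tree_iso L V2 E2 V1 E1"
proof -
  obtain f where f: "bij_betw f V1 V2" "\<forall>a\<in>V1. \<forall>b\<in>V1. {a, b} \<in> E1 \<longleftrightarrow> {f a, f b} \<in> E2"
    "\<forall>l\<in>L. f l = l" using assms(1) unfolding tree_iso_def by blast
  define g where "g = inv_into V1 f"
  have g: "bij_betw g V2 V1" unfolding g_def by (rule bij_betw_inv_into[OF f(1)])
  have fg: "f (g a) = a" if "a \<in> V2" for a
    using that f(1) unfolding g_def bij_betw_def by (simp add: f_inv_into_f)
  have gV: "g a \<in> V1" if "a \<in> V2" for a using g that unfolding bij_betw_def by auto
  have "{a, b} \<in> E2 \<longleftrightarrow> {g a, g b} \<in> E1" if "a \<in> V2" "b \<in> V2" for a b
    using f(2) gV[OF that(1)] gV[OF that(2)] fg[OF that(1)] fg[OF that(2)] by metis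
  moreover have "g l = l" if "l \<in> L" for l
  proof -
    have "l \<in> V1" using that assms(2) by auto
    then have "g (f l) = l" using f(1) unfolding g_def bij_betw_def by (simp add: inv_into_f_f)
    then show ?thesis using f(3) that by simp
  qed
  ultimately show ?thesis unfolding tree_iso_def using g by blast
qed

lemma iso_reach:
  assumes ok1: "att_ok W H h1 d1 c1 x y" and ok2: "att_ok W H h2 d2 c2 x y"
    and bij: "bij_betw f (attach_cherry_V W d1 c1 x y) (attach_cherry_V W d2 c2 x y)"
    and edges: "\<forall>a\<in>attach_cherry_V W d1 c1 x y. \<forall>b\<in>attach_cherry_V W d1 c1 x y.
       {a, b} \<in> attach_cherry_E H h1 d1 c1 x y \<longleftrightarrow> {f a, f b} \<in> attach_cherry_E H h2 d2 c2 x y"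
    and fixL: "\<forall>l\<in>L. f l = l" and xL: "x \<in> L" and yL: "y \<in> L"
    and l: "l1 \<in> L" "l2 \<in> L" and r: "l2 \<in> reach (H - {h1}) l1"
  shows "l2 \<in> reach (H - {h2}) l1"
proof -
  have o1: "wfe W H" "h1 \<in> H" "d1 \<notin> W" "c1 \<notin> W" "x \<notin> W" "y \<notin> W" "d1 \<noteq> c1" "d1 \<noteq> x" "d1 \<noteq> y"
    "c1 \<noteq> x" "c1 \<noteq> y" "x \<noteq> y" using ok1 unfolding att_ok_def by auto
  have o2: "h2 \<in> H" "d2 \<notin> W" "c2 \<notin> W" "d2 \<noteq> c2" "d2 \<noteq> x" "d2 \<noteq> y" "c2 \<noteq> x" "c2 \<noteq> y"
    using ok2 unfolding att_ok_def by auto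
  have HW: "p \<in> W" "q \<in> W" if "{p, q} \<in> H" for p q using wfe_edge[OF o1(1) that] by auto
  have nH1: "{p, q} \<notin> H" if "p \<notin> W" for p q using HW that by blast
  have nH2: "{p, q} \<notin> H" if "q \<notin> W" for p q using HW that by blast
  have h2W: "h2 \<subseteq> W" using o1(1) o2(1) unfolding wfe_def by auto
  have hn: "x \<notin> h2" "y \<notin> h2" "d2 \<notin> h2" "c2 \<notin> h2" using h2W o1 o2 by auto
  have inj: "inj_on f (attach_cherry_V W d1 c1 x y)" using bij unfolding bij_betw_def by simp
  have fV: "f a \<in> attach_cherry_V W d2 c2 x y" if "a \<in> attach_cherry_V W d1 c1 x y" for a
    using bij that unfolding bij_betw_def by auto
  have inV: "x \<in> attach_cherry_V W d1 c1 x y" "y \<in> attach_cherry_V W d1 c1 x y"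
    "c1 \<in> attach_cherry_V W d1 c1 x y" "d1 \<in> attach_cherry_V W d1 c1 x y"
    by (simp_all add: att_V)
  have fx: "f x = x" "f y = y" using fixL xL yL by auto
  have "{c1, x} \<in> attach_cherry_E H h1 d1 c1 x y" by (simp add: AE_mem[OF ok1])
  then have "{f c1, x} \<in> attach_cherry_E H h2 d2 c2 x y" using edges inV fx by auto
  then have fc: "f c1 = c2" unfolding AE_mem[OF ok2] using o1 o2 hn nH2[of x] by (auto simp: doubleton_eq_iff)
  have "{d1, c1} \<in> attach_cherry_E H h1 d1 c1 x y" by (simp add: AE_mem[OF ok1])
  then have "{f d1, c2} \<in> attach_cherry_E H h2 d2 c2 x y" using edges inV fc by auto
  then have "f d1 = d2 \<or> f d1 = x \<or> f d1 = y" unfolding AE_mem[OF ok2] using o1 o2 hn nH2[of c2]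
    by (auto simp: doubleton_eq_iff)
  moreover have "f d1 \<noteq> x" using inj inV fx o1 unfolding inj_on_def by metis
  moreover have "f d1 \<noteq> y" using inj inV fx o1 unfolding inj_on_def by metis
  ultimately have fd: "f d1 = d2" by blast
  have step: "(f p, f q) \<in> (adj (H - {h2}))\<^sup>*" if pq: "(p, q) \<in> adj (H - {h1})" for p q
  proof -
    have pq': "{p, q} \<in> H" "{p, q} \<noteq> h1" using pq by auto
    have pW: "p \<in> W" "q \<in> W" using HW pq'(1) by auto
    then have pV: "p \<in> attach_cherry_V W d1 c1 x y" "q \<in> attach_cherry_V W d1 c1 x y"
      by (simp_all add: att_V)
    have "{p, q} \<in> attach_cherry_E H h1 d1 c1 x y" using pq' by (simp add: AE_mem[OF ok1])
    then have E2: "{f p, f q} \<in> attach_cherry_E H h2 d2 c2 x y" using edges pV by auto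
    have nd: "f p \<noteq> d2" "f q \<noteq> d2" "f p \<noteq> c2" "f q \<noteq> c2"
      using inj pV inV fd fc pW o1 unfolding inj_on_def by metis+
    have "{f p, f q} \<in> H \<and> {f p, f q} \<noteq> h2" using E2 nd unfolding AE_mem[OF ok2]
      by (auto simp: doubleton_eq_iff)
    then show ?thesis by auto
  qed
  have "(f l1, f l2) \<in> (adj (H - {h2}))\<^sup>*"
    by (rule rt_sim[of l1 l2 "adj (H - {h1})" f]) (use r step in \<open>auto simp: reach_def\<close>)
  then show ?thesis using fixL l by (simp add: reach_def)
qed


lemma att_iso_only:
  assumes ok1: "att_ok W H h1 d1 c1 x y" and ok2: "att_ok W H h2 d2 c2 x y"
    and fin: "finite W" and br: "bridges H" and nd2: "\<forall>t\<in>W. degree H t \<noteq> 2"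
    and conn: "\<forall>p\<in>W. \<forall>q\<in>W. (p, q) \<in> (adj H)\<^sup>*"
    and lv: "\<forall>l\<in>W. degree H l \<le> 1 \<longrightarrow> l \<in> L" and LW: "L \<subseteq> W \<union> {x, y}" and xL: "x \<in> L" and yL: "y \<in> L"
    and iso: "tree_iso L (attach_cherry_V W d1 c1 x y) (attach_cherry_E H h1 d1 c1 x y)
                          (attach_cherry_V W d2 c2 x y) (attach_cherry_E H h2 d2 c2 x y)"
  shows "h1 = h2"
proof (rule ccontr)
  assume ne: "h1 \<noteq> h2"
  have wf: "wfe W H" "h1 \<in> H" "h2 \<in> H" using ok1 ok2 unfolding att_ok_def by auto
  obtain l1 l2 where L12: "degree H l1 \<le> 1" "l1 \<in> W" "degree H l2 \<le> 1" "l2 \<in> W"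
    and df: "(l2 \<in> reach (H - {h1}) l1) \<noteq> (l2 \<in> reach (H - {h2}) l1)"
    using core[OF fin wf(1) br nd2 conn wf(2) wf(3) ne] by blast
  have lL: "l1 \<in> L" "l2 \<in> L" using lv L12 by auto
  obtain f where f: "bij_betw f (attach_cherry_V W d1 c1 x y) (attach_cherry_V W d2 c2 x y)"
    "\<forall>a\<in>attach_cherry_V W d1 c1 x y. \<forall>b\<in>attach_cherry_V W d1 c1 x y.
       {a, b} \<in> attach_cherry_E H h1 d1 c1 x y \<longleftrightarrow> {f a, f b} \<in> attach_cherry_E H h2 d2 c2 x y"
    "\<forall>l\<in>L. f l = l" using iso unfolding tree_iso_def by blast
  have "L \<subseteq> attach_cherry_V W d1 c1 x y" using LW by (auto simp: att_V)
  then have iso2: "tree_iso L (attach_cherry_V W d2 c2 x y) (attach_cherry_E H h2 d2 c2 x y)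
                          (attach_cherry_V W d1 c1 x y) (attach_cherry_E H h1 d1 c1 x y)"
    using tree_iso_sym[OF iso] by blast
  obtain g where g: "bij_betw g (attach_cherry_V W d2 c2 x y) (attach_cherry_V W d1 c1 x y)"
    "\<forall>a\<in>attach_cherry_V W d2 c2 x y. \<forall>b\<in>attach_cherry_V W d2 c2 x y.
       {a, b} \<in> attach_cherry_E H h2 d2 c2 x y \<longleftrightarrow> {g a, g b} \<in> attach_cherry_E H h1 d1 c1 x y"
    "\<forall>l\<in>L. g l = l" using iso2 unfolding tree_iso_def by blast
  have "l2 \<in> reach (H - {h1}) l1 \<Longrightarrow> l2 \<in> reach (H - {h2}) l1"
    by (rule iso_reach[OF ok1 ok2 f xL yL lL])
  moreover have "l2 \<in> reach (H - {h2}) l1 \<Longrightarrow> l2 \<in> reach (H - {h1}) l1"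
    by (rule iso_reach[OF ok2 ok1 g xL yL lL])
  ultimately show False using df by blast
qed


locale TS =
  fixes X V :: "'a set" and E :: "'a set set" and v w z' z q1 q2 :: 'a
  assumes wfE: "wfe V E" and finV: "finite V" and brE: "bridges E"
    and connE: "\<forall>a\<in>V. \<forall>b\<in>V. (a, b) \<in> (adj E)\<^sup>*"
    and lvs: "\<forall>t\<in>V. degree E t \<le> 1 \<longleftrightarrow> t \<in> X" and nd2E: "\<forall>t\<in>V. degree E t \<noteq> 2"
    and XV: "X \<subseteq> V"
    and Nv: "neighbors E v = {z'}" and Nw: "neighbors E w = {z'}"
    and Nz': "neighbors E z' = {v, w, z}" and Nz: "neighbors E z = {z', q1, q2}"
    and dist: "v \<noteq> w" "v \<noteq> z'" "v \<noteq> z" "w \<noteq> z'" "w \<noteq> z" "z' \<noteq> z" "q1 \<noteq> q2"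
      "q1 \<noteq> v" "q1 \<noteq> w" "q1 \<noteq> z'" "q1 \<noteq> z" "q2 \<noteq> v" "q2 \<noteq> w" "q2 \<noteq> z'" "q2 \<noteq> z"
    and q12: "{q1, q2} \<notin> E"
begin

definition S where "S = {v, w, z', z}"
definition W where "W = V - S"
definition K where "K = {e\<in>E. e \<inter> S = {}}"
definition H where "H = K \<union> {{q1, q2}}"

lemma finE: "finite E" using wfe_finite[OF finV wfE] .

lemma nb_edge: "u \<in> neighbors E t \<longleftrightarrow> {t, u} \<in> E"
proof
  assume "{t, u} \<in> E"
  then have "u \<noteq> t" using wfe_edge[OF wfE] by blast
  then show "u \<in> neighbors E t" using \<open>{t, u} \<in> E\<close> by (simp add: neighbors_def)
qed (simp add: neighbors_def)

lemma edge_v: "{v, u} \<in> E \<longleftrightarrow> u = z'" using Nv nb_edge by blast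
lemma edge_w: "{w, u} \<in> E \<longleftrightarrow> u = z'" using Nw nb_edge by blast
lemma edge_z': "{z', u} \<in> E \<longleftrightarrow> u = v \<or> u = w \<or> u = z" using Nz' nb_edge by blast
lemma edge_z: "{z, u} \<in> E \<longleftrightarrow> u = z' \<or> u = q1 \<or> u = q2" using Nz nb_edge by blast

lemma edge_S:
  assumes "{p, u} \<in> E" "p \<in> S"
  shows "(p = v \<and> u = z') \<or> (p = w \<and> u = z') \<or> (p = z' \<and> (u = v \<or> u = w \<or> u = z)) \<or>
         (p = z \<and> (u = z' \<or> u = q1 \<or> u = q2))"
  using assms edge_v edge_w edge_z' edge_z unfolding S_def by blast

lemma qE: "{z, q1} \<in> E" "{z, q2} \<in> E" "{q1, z} \<in> E" "{q2, z} \<in> E"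
  using edge_z by (auto simp: insert_commute)

lemma qV: "q1 \<in> V" "q2 \<in> V" "z \<in> V" using wfe_edge[OF wfE qE(1)] wfe_edge[OF wfE qE(2)] by auto

lemma qW: "q1 \<in> W" "q2 \<in> W" using qV dist unfolding W_def S_def by auto

lemma K_edge: "{p, q} \<in> K \<longleftrightarrow> {p, q} \<in> E \<and> p \<notin> S \<and> q \<notin> S"
  unfolding K_def by auto

lemma wfH: "wfe W H"
  unfolding wfe_def
proof
  fix e assume "e \<in> H"
  then show "\<exists>p q. e = {p, q} \<and> p \<in> W \<and> q \<in> W \<and> p \<noteq> q"
  proof (cases "e = {q1, q2}")
    case True then show ?thesis using qW dist by blast
  next
    case False
    then have eK: "e \<in> E" "e \<inter> S = {}" using \<open>e \<in> H\<close> unfolding H_def K_def by auto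
    then obtain p q where "e = {p, q}" "p \<in> V" "q \<in> V" "p \<noteq> q" using wfE unfolding wfe_def by blast
    then show ?thesis using eK unfolding W_def by blast
  qed
qed

lemma finW: "finite W" unfolding W_def using finV by simp

lemma q12K: "{q1, q2} \<notin> K" using q12 unfolding K_def by simp

lemma H_minus_q: "H - {{q1, q2}} = K" unfolding H_def using q12K by auto

lemma K_sub: "K \<subseteq> E" unfolding K_def by auto

lemma brH: "bridges H"
  unfolding bridges_def
proof (intro allI impI notI)
  fix a b assume ab: "{a, b} \<in> H" and r: "(a, b) \<in> (adj (H - {{a, b}}))\<^sup>*"
  have abW: "a \<in> W" "b \<in> W" "a \<noteq> b" using wfe_edge[OF wfH ab] by auto
  show False
  proof (cases "{a, b} = {q1, q2}")
    case False
    then have abE: "{a, b} \<in> E" using ab unfolding H_def K_def by auto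
    have "(a, b) \<in> (adj (E - {{a, b}}))\<^sup>*"
    proof -
      have "(id a, id b) \<in> (adj (E - {{a, b}}))\<^sup>*"
      proof (rule rt_sim[OF r])
        fix p q assume pq: "(p, q) \<in> adj (H - {{a, b}})"
        show "(id p, id q) \<in> (adj (E - {{a, b}}))\<^sup>*"
        proof (cases "{p, q} = {q1, q2}")
          case True
          have zab: "z \<notin> {a, b}" using abW unfolding W_def S_def by auto
          have "{p, z} \<in> E" "{z, q} \<in> E" using True qE by (auto simp: doubleton_eq_iff)
          moreover have "{p, z} \<noteq> {a, b}" "{z, q} \<noteq> {a, b}" using zab by auto
          ultimately have s1: "(p, z) \<in> adj (E - {{a, b}})" and s2: "(z, q) \<in> adj (E - {{a, b}})" by auto
          show ?thesis using rtrancl_into_rtrancl[OF r_into_rtrancl[OF s1] s2] by simp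
        next
          case False
          then have "{p, q} \<in> E - {{a, b}}" using pq unfolding H_def K_def by auto
          then have s: "(p, q) \<in> adj (E - {{a, b}})" by simp
          show ?thesis using r_into_rtrancl[OF s] by simp
        qed
      qed
      then show ?thesis by simp
    qed
    then show False using bridgeD[OF brE abE] by simp
  next
    case True
    then have "H - {{a, b}} = K" using H_minus_q by simp
    then have rK: "(a, b) \<in> (adj K)\<^sup>*" using r by simp
    have aq: "{a, z} \<in> E" "{b, z} \<in> E" using True qE by (auto simp: doubleton_eq_iff)
    have "K \<subseteq> E - {{a, z}}"
    proof
      fix e assume "e \<in> K"
      then have "e \<in> E" "z \<notin> e" unfolding K_def S_def by auto
      then show "e \<in> E - {{a, z}}" by auto
    qed
    then have "(a, b) \<in> (adj (E - {{a, z}}))\<^sup>*" using rK by (rule adj_mono)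
    moreover have "{b, z} \<in> E - {{a, z}}" using aq abW by (auto simp: doubleton_eq_iff)
    then have "(b, z) \<in> adj (E - {{a, z}})" by simp
    ultimately have "(a, z) \<in> (adj (E - {{a, z}}))\<^sup>*" by (rule rtrancl_into_rtrancl)
    then show False using bridgeD[OF brE aq(1)] by simp
  qed
qed

lemma finH: "finite H" using wfe_finite[OF finW wfH] .

lemma gstep:
  assumes pq: "{p, q} \<in> E"
  shows "((if p \<in> S then q1 else p), (if q \<in> S then q1 else q)) \<in> (adj H)\<^sup>*"
proof -
  have qH: "{q1, q2} \<in> H" "{q2, q1} \<in> H" unfolding H_def by (auto simp: insert_commute)
  have q1S: "q1 \<notin> S" "q2 \<notin> S" using dist unfolding S_def by auto
  show ?thesis
  proof (cases "p \<in> S")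
    case pS: True
    have "(p = v \<and> q = z') \<or> (p = w \<and> q = z') \<or> (p = z' \<and> (q = v \<or> q = w \<or> q = z)) \<or>
         (p = z \<and> (q = z' \<or> q = q1 \<or> q = q2))" by (rule edge_S[OF pq pS])
    then have "q \<in> S \<or> q = q1 \<or> q = q2" unfolding S_def by auto
    then show ?thesis
    proof (elim disjE)
      assume "q \<in> S" then show ?thesis using pS by simp
    next
      assume "q = q1" then show ?thesis using pS q1S by simp
    next
      assume "q = q2"
      then have "(q1, q2) \<in> adj H" using qH by simp
      then show ?thesis using pS q1S \<open>q = q2\<close> by auto
    qed
  next
    case pS: False
    show ?thesis
    proof (cases "q \<in> S")
      case qS: True
      have qp: "{q, p} \<in> E" using pq by (simp add: insert_commute)
      have "(q = v \<and> p = z') \<or> (q = w \<and> p = z') \<or> (q = z' \<and> (p = v \<or> p = w \<or> p = z)) \<or>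
         (q = z \<and> (p = z' \<or> p = q1 \<or> p = q2))" by (rule edge_S[OF qp qS])
      then have "p = q1 \<or> p = q2" using pS unfolding S_def by auto
      then show ?thesis
      proof
        assume "p = q1" then show ?thesis using qS q1S by simp
      next
        assume "p = q2"
        then have "(q2, q1) \<in> adj H" using qH by simp
        then show ?thesis using qS q1S \<open>p = q2\<close> by auto
      qed
    next
      case qS: False
      then have "{p, q} \<in> H" using pq pS unfolding H_def K_def S_def by auto
      then have "(p, q) \<in> adj H" by simp
      then show ?thesis using pS qS by auto
    qed
  qed
qed

lemma connH: "\<forall>p\<in>W. \<forall>q\<in>W. (p, q) \<in> (adj H)\<^sup>*"
proof (intro ballI)
  fix p q assume p: "p \<in> W" and q: "q \<in> W"
  have "(p, q) \<in> (adj E)\<^sup>*" using connE p q unfolding W_def by auto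
  then have "((\<lambda>t. if t \<in> S then q1 else t) p, (\<lambda>t. if t \<in> S then q1 else t) q) \<in> (adj H)\<^sup>*"
    by (rule rt_sim) (use gstep in simp)
  then show "(p, q) \<in> (adj H)\<^sup>*" using p q unfolding W_def by simp
qed

lemma edge_into_S:
  assumes "{t, u} \<in> E" "t \<notin> S" "u \<in> S"
  shows "u = z \<and> (t = q1 \<or> t = q2)"
proof -
  have ut: "{u, t} \<in> E" using assms(1) by (simp add: insert_commute)
  have "(u = v \<and> t = z') \<or> (u = w \<and> t = z') \<or> (u = z' \<and> (t = v \<or> t = w \<or> t = z)) \<or>
         (u = z \<and> (t = z' \<or> t = q1 \<or> t = q2))" by (rule edge_S[OF ut assms(3)])
  then show ?thesis using assms(2) unfolding S_def by auto
qed

lemma finN: "finite (neighbors E t)"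
proof -
  have "neighbors E t \<subseteq> V"
  proof
    fix u assume "u \<in> neighbors E t"
    then have "{t, u} \<in> E" by (simp add: neighbors_def)
    then show "u \<in> V" using wfe_edge[OF wfE] by simp
  qed
  then show ?thesis using finV by (rule finite_subset)
qed

lemma NH_other:
  assumes "t \<in> W" "t \<noteq> q1" "t \<noteq> q2"
  shows "neighbors H t = neighbors E t"
proof -
  have tS: "t \<notin> S" using assms(1) unfolding W_def by simp
  have "{t, u} \<in> H \<longleftrightarrow> {t, u} \<in> E" for u
  proof
    assume "{t, u} \<in> H"
    then show "{t, u} \<in> E" using assms unfolding H_def K_def by (auto simp: doubleton_eq_iff)
  next
    assume tu: "{t, u} \<in> E"
    have "u \<notin> S" using edge_into_S[OF tu tS] assms by auto
    then show "{t, u} \<in> H" using tu tS unfolding H_def K_def by auto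
  qed
  then show ?thesis unfolding neighbors_def by simp
qed

lemma NH_q:
  assumes "t = q1 \<and> t' = q2 \<or> t = q2 \<and> t' = q1"
  shows "neighbors H t = insert t' (neighbors E t - {z})"
proof -
  have tS: "t \<notin> S" "t' \<notin> S" using assms dist unfolding S_def by auto
  have tt: "{t, t'} = {q1, q2}" using assms by (auto simp: insert_commute)
  have tt': "t \<noteq> t'" using assms dist by auto
  have "u \<in> neighbors H t \<longleftrightarrow> u \<in> insert t' (neighbors E t - {z})" for u
  proof
    assume "u \<in> neighbors H t"
    then have u: "{t, u} \<in> H" "u \<noteq> t" by (auto simp: neighbors_def)
    show "u \<in> insert t' (neighbors E t - {z})"
    proof (cases "{t, u} = {q1, q2}")
      case True then have "u = t'" using tt u(2) by (auto simp: doubleton_eq_iff)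
      then show ?thesis by simp
    next
      case False
      then have "{t, u} \<in> K" using u(1) unfolding H_def by simp
      then have "{t, u} \<in> E" "u \<notin> S" using K_edge by auto
      moreover have "z \<in> S" unfolding S_def by simp
      ultimately show ?thesis using u(2) by (auto simp: neighbors_def)
    qed
  next
    assume "u \<in> insert t' (neighbors E t - {z})"
    then show "u \<in> neighbors H t"
    proof
      assume "u = t'" then show ?thesis using tt tt' unfolding neighbors_def H_def by simp
    next
      assume "u \<in> neighbors E t - {z}"
      then have tu: "{t, u} \<in> E" "u \<noteq> t" "u \<noteq> z" by (auto simp: neighbors_def)
      have "u \<notin> S" using edge_into_S[OF tu(1) tS(1)] tu(3) by auto
      then have "{t, u} \<in> K" using tu tS K_edge by auto
      then show ?thesis using tu(2) unfolding neighbors_def H_def by simp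
    qed
  qed
  then show ?thesis by auto
qed

lemma degH: "t \<in> W \<Longrightarrow> degree H t = degree E t"
proof -
  assume tW: "t \<in> W"
  have dE: "degree E t = card (neighbors E t)" by (rule degree_nbrs[OF finE wfE])
  have dH: "degree H t = card (neighbors H t)" by (rule degree_nbrs[OF finH wfH])
  show ?thesis
  proof (cases "t = q1 \<or> t = q2")
    case False then show ?thesis using NH_other[OF tW] dE dH by simp
  next
    case True
    then obtain t' where tt: "t = q1 \<and> t' = q2 \<or> t = q2 \<and> t' = q1" by blast
    have zN: "z \<in> neighbors E t" using True qE by (auto simp: nb_edge)
    have tN: "t' \<notin> neighbors E t" using tt q12 by (auto simp: nb_edge insert_commute)
    have "card (neighbors H t) = card (insert t' (neighbors E t - {z}))" using NH_q[OF tt] by simp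
    also have "\<dots> = Suc (card (neighbors E t - {z}))" using tN finN by simp
    also have "\<dots> = card (neighbors E t)" using zN finN
      by (metis card_Suc_Diff1)
    finally show ?thesis using dE dH by simp
  qed
qed

lemma nd2H: "\<forall>t\<in>W. degree H t \<noteq> 2"
  using degH nd2E unfolding W_def by auto

lemma leavesH: "\<forall>t\<in>W. degree H t \<le> 1 \<longrightarrow> t \<in> X - {v, w}"
  using degH lvs unfolding W_def S_def by auto

end


lemma deg1_unique:
  assumes "finite F" "degree F t \<le> 1" "A \<in> F" "B \<in> F" "t \<in> A" "t \<in> B"
  shows "A = B"
proof (rule ccontr)
  assume "A \<noteq> B"
  then have "card {A, B} = 2" by simp
  moreover have "{A, B} \<subseteq> {e\<in>F. t \<in> e}" using assms by auto
  then have "card {A, B} \<le> card {e\<in>F. t \<in> e}" by (rule card_mono[rotated]) (use assms(1) in simp)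
  ultimately show False using assms(2) unfolding degree_def by simp
qed

context TS
begin

definition T3 where "T3 = {v, w, z'}"

lemma vV: "v \<in> V" "w \<in> V" "z' \<in> V"
proof -
  have "{v, z'} \<in> E" "{w, z'} \<in> E" using edge_v edge_w by auto
  then show "v \<in> V" "w \<in> V" "z' \<in> V" using wfe_edge[OF wfE] by auto
qed

lemma EA_fin:
  assumes "e \<in> E"
  shows "finite (attach_cherry_E E e u c x y)"
proof -
  have "finite e" using assms wfE unfolding wfe_def by auto
  then have "finite {{p, u} |p. p \<in> e}" by (simp add: Setcompr_eq_image)
  then show ?thesis unfolding attach_cherry_E_def using finE by simp
qed

lemma filt3:
  assumes "A \<inter> T = {}" "B \<inter> T = {}" "C \<inter> T = {}"
  shows "{g \<in> (F - {e}) \<union> M \<union> {A, B, C}. g \<inter> T = {}} =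
     ({g\<in>F. g \<inter> T = {}} - {e}) \<union> {g \<in> M. g \<inter> T = {}} \<union> {A, B, C}"
  using assms by auto

lemma E0_eq:
  assumes "u \<notin> V" "c \<notin> V" "x \<notin> V" "y \<notin> V"
  shows "{g \<in> attach_cherry_E E e u c x y. g \<inter> T3 = {}} =
     ({g\<in>E. g \<inter> T3 = {}} - {e}) \<union> {g \<in> {{p, u} |p. p \<in> e}. g \<inter> T3 = {}} \<union> {{u, c}, {c, x}, {c, y}}"
proof -
  have "u \<notin> T3" "c \<notin> T3" "x \<notin> T3" "y \<notin> T3" using assms vV unfolding T3_def by auto
  then have "{u, c} \<inter> T3 = {}" "{c, x} \<inter> T3 = {}" "{c, y} \<inter> T3 = {}" by auto
  then show ?thesis unfolding attach_cherry_E_def by (rule filt3)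
qed

lemma Eavoid: "{g\<in>E. g \<inter> T3 = {}} = K \<union> {{z, q1}, {z, q2}}"
proof
  show "{g\<in>E. g \<inter> T3 = {}} \<subseteq> K \<union> {{z, q1}, {z, q2}}"
  proof
    fix g assume g: "g \<in> {g\<in>E. g \<inter> T3 = {}}"
    show "g \<in> K \<union> {{z, q1}, {z, q2}}"
    proof (cases "z \<in> g")
      case False
      then have "g \<inter> S = {}" using g unfolding S_def T3_def by auto
      then show ?thesis using g unfolding K_def by simp
    next
      case True
      have gE: "g \<in> E" using g by simp
      obtain p q where pq: "g = {p, q}" "p \<noteq> q" using wfE gE unfolding wfe_def by blast
      obtain t where t: "g = {z, t}"
      proof (cases "p = z")
        case True then show ?thesis using that[of q] pq by simp
      next
        case False then have "q = z" using pq \<open>z \<in> g\<close> by auto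
        then show ?thesis using that[of p] pq by (simp add: insert_commute)
      qed
      then have "{z, t} \<in> E" "t \<noteq> z'" using g unfolding T3_def by auto
      then have "t = q1 \<or> t = q2" using edge_z[of t] by simp
      then show ?thesis using t by auto
    qed
  qed
next
  show "K \<union> {{z, q1}, {z, q2}} \<subseteq> {g\<in>E. g \<inter> T3 = {}}"
  proof -
    have "{z, q1} \<inter> T3 = {}" "{z, q2} \<inter> T3 = {}" using dist unfolding T3_def by auto
    moreover have "K \<subseteq> {g\<in>E. g \<inter> T3 = {}}" unfolding K_def S_def T3_def by auto
    ultimately show ?thesis using qE(1,2) by auto
  qed
qed

lemma okA:
  assumes e: "e \<in> E" and fr: "u \<notin> V" "c \<notin> V" "x \<notin> V" "y \<notin> V" "u \<noteq> c" "u \<noteq> x" "u \<noteq> y"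
    "c \<noteq> x" "c \<noteq> y" "x \<noteq> y"
  shows "att_ok V E e u c x y"
  using wfE e fr unfolding att_ok_def by auto

lemma unpack:
  assumes e: "e \<in> E" "e \<noteq> {v, z'}" "e \<noteq> {w, z'}"
    and fr: "u \<notin> V" "c \<notin> V" "x \<notin> V" "y \<notin> V" "u \<noteq> c" "u \<noteq> x" "u \<noteq> y"
    "c \<noteq> x" "c \<noteq> y" "x \<noteq> y"
    and red: "cherry_reduction2 (attach_cherry_V V u c x y) (attach_cherry_E E e u c x y) v w V' E'"
  obtains s a b where "{z', s} \<in> attach_cherry_E E e u c x y" "s \<notin> {v, w}"
    "neighbors {g \<in> attach_cherry_E E e u c x y. g \<inter> T3 = {}} s = {a, b}" "a \<noteq> b"
    "V' = (attach_cherry_V V u c x y - T3) - {s}"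
    "E' = ({g \<in> attach_cherry_E E e u c x y. g \<inter> T3 = {}} - {{a, s}, {s, b}}) \<union> {{a, b}}"
proof -
  have ok: "att_ok V E e u c x y" by (rule okA[OF e(1) fr])
  obtain z'' s a b where r:
    "v \<in> leaves (attach_cherry_V V u c x y) (attach_cherry_E E e u c x y)"
    "{v, z''} \<in> attach_cherry_E E e u c x y" "{z'', s} \<in> attach_cherry_E E e u c x y" "s \<notin> {v, w}"
    "neighbors {g \<in> attach_cherry_E E e u c x y. g \<inter> {v, w, z''} = {}} s = {a, b}" "a \<noteq> b"
    "V' = (attach_cherry_V V u c x y - {v, w, z''}) - {s}"
    "E' = ({g \<in> attach_cherry_E E e u c x y. g \<inter> {v, w, z''} = {}} - {{a, s}, {s, b}}) \<union> {{a, b}}"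
    using red unfolding cherry_reduction2_def Let_def by blast
  have "degree (attach_cherry_E E e u c x y) v \<le> 1" using r(1) unfolding leaves_def by simp
  moreover have "{v, z'} \<in> attach_cherry_E E e u c x y"
    unfolding AE_mem[OF ok] using edge_v e(2) by simp
  ultimately have "{v, z''} = {v, z'}" using deg1_unique[OF EA_fin[OF e(1)]] r(2) by blast
  then have "z'' = z'" using dist by (auto simp: doubleton_eq_iff)
  then show ?thesis using that r unfolding T3_def by blast
qed

lemma trich:
  assumes e: "e \<in> E" "e \<noteq> {v, z'}" "e \<noteq> {w, z'}"
  shows "e = {z', z} \<or> e = {z, q1} \<or> e = {z, q2} \<or> e \<in> K"
proof -
  obtain p q where pq: "e = {p, q}" "p \<noteq> q" using wfE e(1) unfolding wfe_def by blast
  have pE: "{p, q} \<in> E" "{q, p} \<in> E" using pq e(1) by (auto simp: insert_commute)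
  show ?thesis
  proof (cases "p \<in> S \<or> q \<in> S")
    case False then show ?thesis using pq e(1) K_edge by auto
  next
    case True
    then show ?thesis
    proof
      assume "p \<in> S"
      then show ?thesis using edge_S[OF pE(1)] e pq by (auto simp: insert_commute)
    next
      assume "q \<in> S"
      then show ?thesis using edge_S[OF pE(2)] e pq by (auto simp: insert_commute)
    qed
  qed
qed

lemma un_diff: "K' \<inter> D = {} \<Longrightarrow> (K' \<union> R) - D \<union> N = K' \<union> (R - D \<union> N)"
  by auto

lemma nb_un: "(\<forall>g\<in>K'. s \<notin> g) \<Longrightarrow> neighbors (K' \<union> R) s = neighbors R s"
  unfolding neighbors_def by auto

lemma K_notin: "g \<in> K \<Longrightarrow> g \<subseteq> W"
proof -
  assume "g \<in> K"
  then show "g \<subseteq> W" using wfH unfolding wfe_def H_def by auto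
qed

lemma Mpair: "{{p, u} |p. p \<in> {\<alpha>, \<beta>}} = {{\<alpha>, u}, {\<beta>, u}}"
  by auto

lemma KV: "g \<in> K \<Longrightarrow> g \<subseteq> V"
  using K_notin unfolding W_def by blast

lemma caseA:
  assumes fr: "u \<notin> V" "c \<notin> V" "x \<notin> V" "y \<notin> V" "u \<noteq> c" "u \<noteq> x" "u \<noteq> y"
    "c \<noteq> x" "c \<noteq> y" "x \<noteq> y"
    and e: "e = {z', z}"
    and sz: "{z', s} \<in> attach_cherry_E E e u c x y" "s \<notin> {v, w}"
    and nb: "neighbors {g \<in> attach_cherry_E E e u c x y. g \<inter> T3 = {}} s = {a, b}" "a \<noteq> b"
    and V': "V' = (attach_cherry_V V u c x y - T3) - {s}"
    and E': "E' = ({g \<in> attach_cherry_E E e u c x y. g \<inter> T3 = {}} - {{a, s}, {s, b}}) \<union> {{a, b}}"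
  shows "att_ok W H {q1, q2} z c x y \<and> V' = attach_cherry_V W z c x y \<and> E' = attach_cherry_E H {q1, q2} z c x y"
proof -
  have eE: "e \<in> E" using e edge_z' by (simp add: insert_commute)
  have ok: "att_ok V E e u c x y" by (rule okA[OF eE fr])
  have neq: "u \<noteq> v" "v \<noteq> u" "u \<noteq> w" "w \<noteq> u" "u \<noteq> z'" "z' \<noteq> u" "u \<noteq> z" "z \<noteq> u" "u \<noteq> q1" "q1 \<noteq> u" "u \<noteq> q2" "q2 \<noteq> u" "c \<noteq> v" "v \<noteq> c" "c \<noteq> w" "w \<noteq> c" "c \<noteq> z'" "z' \<noteq> c" "c \<noteq> z" "z \<noteq> c" "c \<noteq> q1" "q1 \<noteq> c" "c \<noteq> q2" "q2 \<noteq> c" "x \<noteq> v" "v \<noteq> x" "x \<noteq> w" "w \<noteq> x" "x \<noteq> z'" "z' \<noteq> x" "x \<noteq> z" "z \<noteq> x" "x \<noteq> q1" "q1 \<noteq> x" "x \<noteq> q2" "q2 \<noteq> x" "y \<noteq> v" "v \<noteq> y" "y \<noteq> w" "w \<noteq> y" "y \<noteq> z'" "z' \<noteq> y" "y \<noteq> z" "z \<noteq> y" "y \<noteq> q1" "q1 \<noteq> y" "y \<noteq> q2" "q2 \<noteq> y" using fr qV vV by auto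
  have "s = u"
  proof (rule ccontr)
    assume "s \<noteq> u"
    then have "{z', s} \<in> E" "{z', s} \<noteq> e" using sz(1) unfolding AE_mem[OF ok] using neq
      by (auto simp: doubleton_eq_iff)
    then show False using edge_z'[of s] sz(2) e by auto
  qed
  have M: "{g \<in> {{p, u} |p. p \<in> e}. g \<inter> T3 = {}} = {{z, u}}"
    unfolding e Mpair T3_def using neq dist by auto
  have eK: "e \<notin> K \<union> {{z, q1}, {z, q2}}"
    using e dist unfolding K_def S_def by (auto simp: doubleton_eq_iff)
  have E0: "{g \<in> attach_cherry_E E e u c x y. g \<inter> T3 = {}} =
     K \<union> {{z, q1}, {z, q2}, {z, u}, {u, c}, {c, x}, {c, y}}"
    unfolding E0_eq[OF fr(1-4)] Eavoid M using eK by auto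
  have uK: "\<forall>g\<in>K. u \<notin> g" using KV fr(1) by blast
  have "neighbors {{z, q1}, {z, q2}, {z, u}, {u, c}, {c, x}, {c, y}} u = {z, c}"
    unfolding neighbors_def using neq fr dist by (auto simp: doubleton_eq_iff)
  then have ab: "{a, b} = {z, c}" using nb(1) unfolding E0 \<open>s = u\<close> nb_un[OF uK] by simp
  have D: "K \<inter> {{a, u}, {u, b}} = {}" using uK by auto
  have E'': "E' = K \<union> ({{z, q1}, {z, q2}, {z, u}, {u, c}, {c, x}, {c, y}} - {{a, u}, {u, b}} \<union> {{a, b}})"
    unfolding E' E0 \<open>s = u\<close> un_diff[OF D] ..
  have R: "{{z, q1}, {z, q2}, {z, u}, {u, c}, {c, x}, {c, y}} - {{a, u}, {u, b}} \<union> {{a, b}} =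
    {{q1, z}, {q2, z}} \<union> {{z, c}, {c, x}, {c, y}}"
  proof -
    from ab have "a = z \<and> b = c \<or> a = c \<and> b = z" by (simp add: doubleton_eq_iff)
    then show ?thesis using neq fr dist
      by (elim disjE) (simp_all add: insert_Diff_if doubleton_eq_iff insert_commute)
  qed
  have T: "attach_cherry_E H {q1, q2} z c x y = K \<union> ({{q1, z}, {q2, z}} \<union> {{z, c}, {c, x}, {c, y}})"
    unfolding attach_cherry_E_def Mpair H_minus_q by auto
  have okW: "att_ok W H {q1, q2} z c x y"
    unfolding att_ok_def using wfH neq fr dist unfolding H_def W_def S_def by auto
  have VV: "V' = attach_cherry_V W z c x y"
    unfolding V' \<open>s = u\<close> att_V attach_cherry_V_def W_def S_def T3_def using neq fr dist qV by auto
  have "E' = attach_cherry_E H {q1, q2} z c x y" by (simp only: E'' R T)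
  then show ?thesis using okW VV by simp
qed

end


context TS
begin

lemma caseB:
  assumes fr: "u \<notin> V" "c \<notin> V" "x \<notin> V" "y \<notin> V" "u \<noteq> c" "u \<noteq> x" "u \<noteq> y"
    "c \<noteq> x" "c \<noteq> y" "x \<noteq> y"
    and e: "e = {z, q}" and qr: "q = q1 \<and> r = q2 \<or> q = q2 \<and> r = q1"
    and sz: "{z', s} \<in> attach_cherry_E E e u c x y" "s \<notin> {v, w}"
    and nb: "neighbors {g \<in> attach_cherry_E E e u c x y. g \<inter> T3 = {}} s = {a, b}" "a \<noteq> b"
    and V': "V' = (attach_cherry_V V u c x y - T3) - {s}"
    and E': "E' = ({g \<in> attach_cherry_E E e u c x y. g \<inter> T3 = {}} - {{a, s}, {s, b}}) \<union> {{a, b}}"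
  shows "att_ok W H {q1, q2} u c x y \<and> V' = attach_cherry_V W u c x y \<and> E' = attach_cherry_E H {q1, q2} u c x y"
proof -
  have eE: "e \<in> E" using e qr qE by auto
  have ok: "att_ok V E e u c x y" by (rule okA[OF eE fr])
  have neq: "u \<noteq> v" "v \<noteq> u" "u \<noteq> w" "w \<noteq> u" "u \<noteq> z'" "z' \<noteq> u" "u \<noteq> z" "z \<noteq> u" "u \<noteq> q1" "q1 \<noteq> u" "u \<noteq> q2" "q2 \<noteq> u" "c \<noteq> v" "v \<noteq> c" "c \<noteq> w" "w \<noteq> c" "c \<noteq> z'" "z' \<noteq> c" "c \<noteq> z" "z \<noteq> c" "c \<noteq> q1" "q1 \<noteq> c" "c \<noteq> q2" "q2 \<noteq> c" "x \<noteq> v" "v \<noteq> x" "x \<noteq> w" "w \<noteq> x" "x \<noteq> z'" "z' \<noteq> x" "x \<noteq> z" "z \<noteq> x" "x \<noteq> q1" "q1 \<noteq> x" "x \<noteq> q2" "q2 \<noteq> x" "y \<noteq> v" "v \<noteq> y" "y \<noteq> w" "w \<noteq> y" "y \<noteq> z'" "z' \<noteq> y" "y \<noteq> z" "z \<noteq> y" "y \<noteq> q1" "q1 \<noteq> y" "y \<noteq> q2" "q2 \<noteq> y" using fr qV vV by auto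
  have qd: "q \<noteq> z" "q \<noteq> z'" "q \<noteq> v" "q \<noteq> w" "r \<noteq> z" "r \<noteq> z'" "r \<noteq> v" "r \<noteq> w" "q \<noteq> r"
    "q \<noteq> u" "q \<noteq> c" "q \<noteq> x" "q \<noteq> y" "r \<noteq> u" "r \<noteq> c" "r \<noteq> x" "r \<noteq> y"
    using qr dist neq by auto
  have "s = z"
  proof -
    have "{z', s} \<in> E \<and> {z', s} \<noteq> e \<or> s = u \<and> z' \<in> e" using sz(1) unfolding AE_mem[OF ok] using neq
      by (auto simp: doubleton_eq_iff)
    moreover have "z' \<notin> e" using e qd dist by auto
    ultimately have "{z', s} \<in> E" by blast
    then show "s = z" using edge_z'[of s] sz(2) by auto
  qed
  have M: "{g \<in> {{p, u} |p. p \<in> e}. g \<inter> T3 = {}} = {{z, u}, {q, u}}"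
    unfolding e Mpair T3_def using neq dist qd by auto
  have E0: "{g \<in> attach_cherry_E E e u c x y. g \<inter> T3 = {}} =
     K \<union> {{z, r}, {z, u}, {q, u}, {u, c}, {c, x}, {c, y}}"
  proof -
    have "K \<union> {{z, q1}, {z, q2}} - {e} = K \<union> {{z, r}}"
    proof -
      have "e \<notin> K" using e unfolding K_def S_def by auto
      moreover have "{z, q1} \<noteq> {z, q2}" using dist by (simp add: doubleton_eq_iff)
      ultimately show ?thesis using e qr dist by (auto simp: doubleton_eq_iff)
    qed
    then show ?thesis unfolding E0_eq[OF fr(1-4)] Eavoid M by auto
  qed
  have zK: "\<forall>g\<in>K. z \<notin> g" unfolding K_def S_def by auto
  have "neighbors {{z, r}, {z, u}, {q, u}, {u, c}, {c, x}, {c, y}} z = {r, u}"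
    unfolding neighbors_def using neq fr dist qd by (auto simp: doubleton_eq_iff)
  then have ab: "{a, b} = {r, u}" using nb(1) unfolding E0 \<open>s = z\<close> nb_un[OF zK] by simp
  have D: "K \<inter> {{a, z}, {z, b}} = {}" using zK by auto
  have E'': "E' = K \<union> ({{z, r}, {z, u}, {q, u}, {u, c}, {c, x}, {c, y}} - {{a, z}, {z, b}} \<union> {{a, b}})"
    unfolding E' E0 \<open>s = z\<close> un_diff[OF D] ..
  have R: "{{z, r}, {z, u}, {q, u}, {u, c}, {c, x}, {c, y}} - {{a, z}, {z, b}} \<union> {{a, b}} =
    {{q1, u}, {q2, u}} \<union> {{u, c}, {c, x}, {c, y}}"
  proof -
    from ab have "a = r \<and> b = u \<or> a = u \<and> b = r" by (simp add: doubleton_eq_iff)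
    then show ?thesis using qr neq fr dist qd
      by (elim disjE) (simp_all add: insert_Diff_if doubleton_eq_iff insert_commute)
  qed
  have T: "attach_cherry_E H {q1, q2} u c x y = K \<union> ({{q1, u}, {q2, u}} \<union> {{u, c}, {c, x}, {c, y}})"
    unfolding attach_cherry_E_def Mpair H_minus_q by auto
  have okW: "att_ok W H {q1, q2} u c x y"
    unfolding att_ok_def using wfH neq fr dist unfolding H_def W_def S_def by auto
  have VV: "V' = attach_cherry_V W u c x y"
    unfolding V' \<open>s = z\<close> att_V attach_cherry_V_def W_def S_def T3_def using neq fr dist qV by auto
  have "E' = attach_cherry_E H {q1, q2} u c x y" by (simp only: E'' R T)
  then show ?thesis using okW VV by simp
qed

lemma caseC:
  assumes fr: "u \<notin> V" "c \<notin> V" "x \<notin> V" "y \<notin> V" "u \<noteq> c" "u \<noteq> x" "u \<noteq> y"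
    "c \<noteq> x" "c \<noteq> y" "x \<noteq> y"
    and eK: "e \<in> K"
    and sz: "{z', s} \<in> attach_cherry_E E e u c x y" "s \<notin> {v, w}"
    and nb: "neighbors {g \<in> attach_cherry_E E e u c x y. g \<inter> T3 = {}} s = {a, b}" "a \<noteq> b"
    and V': "V' = (attach_cherry_V V u c x y - T3) - {s}"
    and E': "E' = ({g \<in> attach_cherry_E E e u c x y. g \<inter> T3 = {}} - {{a, s}, {s, b}}) \<union> {{a, b}}"
  shows "att_ok W H e u c x y \<and> V' = attach_cherry_V W u c x y \<and> E' = attach_cherry_E H e u c x y"
proof -
  have eE: "e \<in> E" using eK K_sub by auto
  have ok: "att_ok V E e u c x y" by (rule okA[OF eE fr])
  have neq: "u \<noteq> v" "v \<noteq> u" "u \<noteq> w" "w \<noteq> u" "u \<noteq> z'" "z' \<noteq> u" "u \<noteq> z" "z \<noteq> u" "u \<noteq> q1" "q1 \<noteq> u" "u \<noteq> q2" "q2 \<noteq> u" "c \<noteq> v" "v \<noteq> c" "c \<noteq> w" "w \<noteq> c" "c \<noteq> z'" "z' \<noteq> c" "c \<noteq> z" "z \<noteq> c" "c \<noteq> q1" "q1 \<noteq> c" "c \<noteq> q2" "q2 \<noteq> c" "x \<noteq> v" "v \<noteq> x" "x \<noteq> w" "w \<noteq> x" "x \<noteq> z'" "z' \<noteq> x" "x \<noteq> z" "z \<noteq> x" "x \<noteq> q1" "q1 \<noteq> x" "x \<noteq> q2" "q2 \<noteq> x" "y \<noteq> v" "v \<noteq> y" "y \<noteq> w" "w \<noteq>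 y" "y \<noteq> z'" "z' \<noteq> y" "y \<noteq> z" "z \<noteq> y" "y \<noteq> q1" "q1 \<noteq> y" "y \<noteq> q2" "q2 \<noteq> y" using fr qV vV by auto
  obtain p q where pq: "e = {p, q}" "p \<in> W" "q \<in> W" "p \<noteq> q"
    using wfH eK unfolding wfe_def H_def by blast
  have pd: "p \<noteq> z" "p \<noteq> z'" "p \<noteq> v" "p \<noteq> w" "q \<noteq> z" "q \<noteq> z'" "q \<noteq> v" "q \<noteq> w"
    "p \<noteq> u" "p \<noteq> c" "p \<noteq> x" "p \<noteq> y" "q \<noteq> u" "q \<noteq> c" "q \<noteq> x" "q \<noteq> y"
    using pq fr unfolding W_def S_def by auto
  have "s = z"
  proof -
    have "{z', s} \<in> E \<and> {z', s} \<noteq> e \<or> s = u \<and> z' \<in> e" using sz(1) unfolding AE_mem[OF ok] using neq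
      by (auto simp: doubleton_eq_iff)
    moreover have "z' \<notin> e" using pq pd by auto
    ultimately have "{z', s} \<in> E" by blast
    then show "s = z" using edge_z'[of s] sz(2) by auto
  qed
  have M: "{g \<in> {{p, u} |p. p \<in> e}. g \<inter> T3 = {}} = {{p, u}, {q, u}}"
    unfolding pq(1) Mpair T3_def using neq pd by auto
  have eq: "e \<noteq> {z, q1}" "e \<noteq> {z, q2}" using pq pd by (auto simp: doubleton_eq_iff)
  have E0: "{g \<in> attach_cherry_E E e u c x y. g \<inter> T3 = {}} =
     (K - {e}) \<union> {{z, q1}, {z, q2}, {p, u}, {q, u}, {u, c}, {c, x}, {c, y}}"
    unfolding E0_eq[OF fr(1-4)] Eavoid M using eq by auto
  have zK: "\<forall>g\<in>K - {e}. z \<notin> g" unfolding K_def S_def by auto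
  have "neighbors {{z, q1}, {z, q2}, {p, u}, {q, u}, {u, c}, {c, x}, {c, y}} z = {q1, q2}"
    unfolding neighbors_def using neq fr dist pd by (auto simp: doubleton_eq_iff)
  then have ab: "{a, b} = {q1, q2}" using nb(1) unfolding E0 \<open>s = z\<close> nb_un[OF zK] by simp
  have D: "(K - {e}) \<inter> {{a, z}, {z, b}} = {}" using zK by auto
  have E'': "E' = (K - {e}) \<union> ({{z, q1}, {z, q2}, {p, u}, {q, u}, {u, c}, {c, x}, {c, y}} - {{a, z}, {z, b}} \<union> {{a, b}})"
    unfolding E' E0 \<open>s = z\<close> un_diff[OF D] ..
  have R: "{{z, q1}, {z, q2}, {p, u}, {q, u}, {u, c}, {c, x}, {c, y}} - {{a, z}, {z, b}} \<union> {{a, b}} =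
    {{q1, q2}} \<union> ({{p, u}, {q, u}} \<union> {{u, c}, {c, x}, {c, y}})"
  proof -
    from ab have "a = q1 \<and> b = q2 \<or> a = q2 \<and> b = q1" by (simp add: doubleton_eq_iff)
    then show ?thesis using neq fr dist pd
      by (elim disjE) (simp_all add: insert_Diff_if doubleton_eq_iff insert_commute)
  qed
  have He: "H - {e} = (K - {e}) \<union> {{q1, q2}}" unfolding H_def using eK q12K by auto
  have T: "attach_cherry_E H e u c x y = (K - {e}) \<union> ({{q1, q2}} \<union> ({{p, u}, {q, u}} \<union> {{u, c}, {c, x}, {c, y}}))"
    unfolding attach_cherry_E_def He by (simp only: pq(1) Mpair Un_assoc)
  have okW: "att_ok W H e u c x y"
    unfolding att_ok_def using wfH eK neq fr dist unfolding H_def W_def S_def by auto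
  have VV: "V' = attach_cherry_V W u c x y"
    unfolding V' \<open>s = z\<close> att_V attach_cherry_V_def W_def S_def T3_def using neq fr dist qV by auto
  have "E' = attach_cherry_E H e u c x y" by (simp only: E'' R T)
  then show ?thesis using okW VV by simp
qed

end


context TS
begin

lemma reduction:
  assumes e: "e \<in> E" "e \<noteq> {v, z'}" "e \<noteq> {w, z'}"
    and fr: "u \<notin> V" "c \<notin> V" "x \<notin> V" "y \<notin> V" "u \<noteq> c" "u \<noteq> x" "u \<noteq> y"
    "c \<noteq> x" "c \<noteq> y" "x \<noteq> y"
    and red: "cherry_reduction2 (attach_cherry_V V u c x y) (attach_cherry_E E e u c x y) v w V' E'"
  shows "\<exists>d. att_ok W H (if z \<in> e then {q1, q2} else e) d c x y \<and> V' = attach_cherry_V W d c x y \<and>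
             E' = attach_cherry_E H (if z \<in> e then {q1, q2} else e) d c x y"
proof -
  obtain s a b where r: "{z', s} \<in> attach_cherry_E E e u c x y" "s \<notin> {v, w}"
    "neighbors {g \<in> attach_cherry_E E e u c x y. g \<inter> T3 = {}} s = {a, b}" "a \<noteq> b"
    "V' = (attach_cherry_V V u c x y - T3) - {s}"
    "E' = ({g \<in> attach_cherry_E E e u c x y. g \<inter> T3 = {}} - {{a, s}, {s, b}}) \<union> {{a, b}}"
    by (rule unpack[OF e fr red])
  have "e = {z', z} \<or> e = {z, q1} \<or> e = {z, q2} \<or> e \<in> K" by (rule trich[OF e])
  then show ?thesis
  proof (elim disjE)
    assume e1: "e = {z', z}"
    then have "z \<in> e" by simp
    then show ?thesis using caseA[OF fr e1 r] by auto
  next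
    assume e1: "e = {z, q1}"
    then have "z \<in> e" by simp
    then show ?thesis using caseB[OF fr e1 _ r, of q2] by auto
  next
    assume e1: "e = {z, q2}"
    then have "z \<in> e" by simp
    then show ?thesis using caseB[OF fr e1 _ r, of q1] by auto
  next
    assume e1: "e \<in> K"
    then have "z \<notin> e" unfolding K_def S_def by auto
    then show ?thesis using caseC[OF fr e1 r] by auto
  qed
qed

lemma zX: "z' \<notin> X" "z \<notin> X"
proof -
  have "degree E z' = 3" "degree E z = 3"
    using Nz' Nz dist degree_nbrs[OF finE wfE] by auto
  then show "z' \<notin> X" "z \<notin> X" using lvs vV qV by auto
qed

lemma LW: "(X - {v, w}) \<union> {x, y} \<subseteq> W \<union> {x, y}"
  using XV zX unfolding W_def S_def by auto

end


lemma nb_single: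
  assumes "finite N" "card N \<le> 1" "a \<in> N"
  shows "N = {a}"
proof -
  have "card N \<ge> 1" using assms(1,3) by (metis card_0_eq empty_iff less_one not_le)
  then have "card N = 1" using assms(2) by simp
  then obtain b where "N = {b}" by (auto simp: card_Suc_eq)
  then show ?thesis using assms(3) by simp
qed

lemma main_setup:
  fixes X V :: "'a set" and E :: "'a set set" and v w z' z :: 'a
  assumes T: "binary_phylo_tree X V E"
    and X4: "card X \<ge> 4"
    and vw: "v \<in> X" "w \<in> X" "v \<noteq> w"
    and z': "{v, z'} \<in> E" "{w, z'} \<in> E"
    and z: "{z', z} \<in> E" "z \<noteq> v" "z \<noteq> w"
  shows "\<exists>q1 q2. TS X V E v w z' z q1 q2"
proof -
  have sg: "simple_graph V E" and Vne: "V \<noteq> {}" and cg: "connected_graph V E" and ac: "acyclic_graph E"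
    and lv: "leaves V E = X" and nd2: "\<forall>t\<in>V. degree E t \<noteq> 2" and d3: "\<forall>t\<in>V. degree E t \<le> 3"
    using T unfolding binary_phylo_tree_def phylo_tree_def is_tree_def by auto
  have wfE: "wfe V E" and finV: "finite V" using sg unfolding simple_graph_def wfe_def by auto
  have finE: "finite E" using wfe_finite[OF finV wfE] .
  have brE: "bridges E" unfolding bridges_def
  proof (intro allI impI)
    fix a b assume "{a, b} \<in> E"
    moreover then have "a \<noteq> b" using wfe_edge[OF wfE] by blast
    ultimately show "(a, b) \<notin> (adj (E - {{a, b}}))\<^sup>*" by (rule acyclic_bridges[OF ac])
  qed
  have connE: "\<forall>a\<in>V. \<forall>b\<in>V. (a, b) \<in> (adj E)\<^sup>*" using cg unfolding connected_graph_def adj_def by simp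
  have lvs: "\<forall>t\<in>V. degree E t \<le> 1 \<longleftrightarrow> t \<in> X" using lv unfolding leaves_def by auto
  have XV: "X \<subseteq> V" using lv unfolding leaves_def by auto
  have dg: "degree E t = card (neighbors E t)" for t by (rule degree_nbrs[OF finE wfE])
  have nbE: "u \<in> neighbors E t \<longleftrightarrow> {t, u} \<in> E" for t u
  proof
    assume "{t, u} \<in> E"
    then have "u \<noteq> t" using wfe_edge[OF wfE] by blast
    then show "u \<in> neighbors E t" using \<open>{t, u} \<in> E\<close> by (simp add: neighbors_def)
  qed (simp add: neighbors_def)
  have finN: "finite (neighbors E t)" for t
  proof -
    have "neighbors E t \<subseteq> V"
    proof
      fix u assume "u \<in> neighbors E t"
      then have "{t, u} \<in> E" by (simp add: neighbors_def)
      then show "u \<in> V" using wfe_edge[OF wfE] by simp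
    qed
    then show ?thesis using finV by (rule finite_subset)
  qed
  have e1: "v \<in> V \<and> z' \<in> V \<and> v \<noteq> z'" by (rule wfe_edge[OF wfE z'(1)])
  have e2: "w \<in> V \<and> z' \<in> V \<and> w \<noteq> z'" by (rule wfe_edge[OF wfE z'(2)])
  have e3: "z' \<in> V \<and> z \<in> V \<and> z' \<noteq> z" by (rule wfe_edge[OF wfE z(1)])
  have inV: "v \<in> V" "w \<in> V" "z' \<in> V" "z \<in> V" using e1 e2 e3 by simp_all
  have vz: "v \<noteq> z'" "w \<noteq> z'" "z' \<noteq> z" using e1 e2 e3 by simp_all
  have "degree E v \<le> 1" "degree E w \<le> 1" using lvs vw inV by auto
  then have cvw: "card (neighbors E v) \<le> 1" "card (neighbors E w) \<le> 1" using dg by simp_all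
  have zv: "z' \<in> neighbors E v" "z' \<in> neighbors E w" using nbE z' by simp_all
  have Nv: "neighbors E v = {z'}" by (rule nb_single[OF finN cvw(1) zv(1)])
  have Nw: "neighbors E w = {z'}" by (rule nb_single[OF finN cvw(2) zv(2)])
  have Nz': "neighbors E z' = {v, w, z}"
  proof -
    have sub: "{v, w, z} \<subseteq> neighbors E z'" using nbE z' z by (auto simp: insert_commute)
    have "card {v, w, z} = 3" using vw z by simp
    moreover have "card (neighbors E z') \<le> 3" using d3 inV dg by auto
    ultimately show ?thesis using card_seteq[OF finN sub] by simp
  qed
  have z'X: "z' \<notin> X" using lvs inV dg Nz' vw z by auto
  have c1: "card (neighbors E z) \<noteq> 2" "card (neighbors E z) \<le> 3" using nd2 d3 inV dg by auto
  have zN: "z' \<in> neighbors E z" using nbE z by (simp add: insert_commute)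
  have c3: "card (neighbors E z) = 3"
  proof (rule ccontr)
    assume "card (neighbors E z) \<noteq> 3"
    then have "card (neighbors E z) \<le> 1" using c1 by auto
    then have Nz: "neighbors E z = {z'}" using nb_single[OF finN _ zN] by simp
    let ?S = "{v, w, z', z}"
    have "p \<in> ?S" if "(v, p) \<in> (adj E)\<^sup>*" for p
      using that
    proof (induction rule: rtrancl_induct)
      case base then show ?case by simp
    next
      case (step y q)
      then have "q \<in> neighbors E y" using nbE by simp
      then show ?case using step(3) Nv Nw Nz' Nz by auto
    qed
    have "V \<subseteq> ?S"
    proof
      fix p assume "p \<in> V"
      then have "(v, p) \<in> (adj E)\<^sup>*" using connE inV(1) by simp
      then show "p \<in> ?S" by fact
    qed
    then have "X \<subseteq> {v, w, z}" using XV z'X by auto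
    then have "card X \<le> card {v, w, z}" by (rule card_mono[rotated]) simp
    also have "\<dots> \<le> 3" by (simp add: card_insert_le_m1)
    finally show False using X4 by simp
  qed
  then have "card (neighbors E z - {z'}) = 2" using zN finN by (simp add: card_Diff_singleton)
  then obtain q1 q2 where q: "neighbors E z - {z'} = {q1, q2}" "q1 \<noteq> q2" by (auto simp: card_2_iff)
  have Nz: "neighbors E z = {z', q1, q2}" using q(1) zN by auto
  have qN: "{z, q1} \<in> E" "{z, q2} \<in> E" "q1 \<noteq> z'" "q2 \<noteq> z'" "q1 \<noteq> z" "q2 \<noteq> z"
    using q(1) nbE by (auto simp: neighbors_def)
  have qv: "q1 \<noteq> v" "q1 \<noteq> w" "q2 \<noteq> v" "q2 \<noteq> w"
  proof -
    have "z \<notin> neighbors E v" "z \<notin> neighbors E w" using Nv Nw vz by auto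
    then show "q1 \<noteq> v" "q1 \<noteq> w" "q2 \<noteq> v" "q2 \<noteq> w" using qN nbE by (auto simp: insert_commute)
  qed
  have q12: "{q1, q2} \<notin> E"
  proof
    assume q12: "{q1, q2} \<in> E"
    let ?cs = "[q1, q2, z]"
    have "distinct ?cs" using q(2) qN by auto
    moreover have "\<forall>i < length ?cs. {?cs ! i, ?cs ! ((i + 1) mod length ?cs)} \<in> E"
    proof (intro allI impI)
      fix i assume "i < length ?cs"
      then have "i = 0 \<or> i = 1 \<or> i = 2" by auto
      then show "{?cs ! i, ?cs ! ((i + 1) mod length ?cs)} \<in> E"
        using q12 qN by (auto simp: insert_commute)
    qed
    moreover have "length ?cs \<ge> 3" by simp
    ultimately show False using ac unfolding acyclic_graph_def by (meson)
  qed
  have "TS X V E v w z' z q1 q2"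
    by (unfold_locales) (use wfE finV brE connE lvs nd2 XV Nv Nw Nz' Nz vw z vz q(2) qN qv q12 in auto)
  then show ?thesis by blast
qed


theorem lemma4:
  fixes X :: "'a set" and V :: "'a set" and E :: "'a set set"
    and v w z' z x y u1 c1 u2 c2 :: 'a
    and e1 e2 :: "'a set"
    and V1 V2 :: "'a set" and E1 E2 :: "'a set set"
  assumes T: "binary_phylo_tree X V E"
    and X4: "card X \<ge> 4"
    and vw: "v \<in> X" "w \<in> X" "v \<noteq> w"
    and z': "{v, z'} \<in> E" "{w, z'} \<in> E"
    and z: "{z', z} \<in> E" "z \<noteq> v" "z \<noteq> w"
    and xy: "x \<notin> V" "y \<notin> V" "x \<noteq> y"
    and e1: "e1 \<in> E" "e1 \<noteq> {v, z'}" "e1 \<noteq> {w, z'}"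
    and e2: "e2 \<in> E" "e2 \<noteq> {v, z'}" "e2 \<noteq> {w, z'}"
    and fresh1: "u1 \<notin> V \<union> {x, y}" "c1 \<notin> V \<union> {x, y}" "u1 \<noteq> c1"
    and fresh2: "u2 \<notin> V \<union> {x, y}" "c2 \<notin> V \<union> {x, y}" "u2 \<noteq> c2"
    and red1: "cherry_reduction2 (attach_cherry_V V u1 c1 x y) (attach_cherry_E E e1 u1 c1 x y)
                 v w V1 E1"
    and red2: "cherry_reduction2 (attach_cherry_V V u2 c2 x y) (attach_cherry_E E e2 u2 c2 x y)
                 v w V2 E2"
  shows "tree_iso ((X - {v, w}) \<union> {x, y}) V1 E1 V2 E2 \<longleftrightarrow>
           (e1 = e2 \<or> (e1 \<in> {e\<in>E. z \<in> e} \<and> e2 \<in> {e\<in>E. z \<in> e}))"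
proof -
  obtain q1 q2 where ts: "TS X V E v w z' z q1 q2"
    using main_setup[OF T X4 vw z' z] by blast
  interpret TS X V E v w z' z q1 q2 by (rule ts)
  define h1 where "h1 = (if z \<in> e1 then {q1, q2} else e1)"
  define h2 where "h2 = (if z \<in> e2 then {q1, q2} else e2)"
  have fr1: "u1 \<notin> V" "c1 \<notin> V" "x \<notin> V" "y \<notin> V" "u1 \<noteq> c1" "u1 \<noteq> x" "u1 \<noteq> y"
    "c1 \<noteq> x" "c1 \<noteq> y" "x \<noteq> y" using fresh1 xy by auto
  have fr2: "u2 \<notin> V" "c2 \<notin> V" "x \<notin> V" "y \<notin> V" "u2 \<noteq> c2" "u2 \<noteq> x" "u2 \<noteq> y"
    "c2 \<noteq> x" "c2 \<noteq> y" "x \<noteq> y" using fresh2 xy by auto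
  obtain d1 where D1: "att_ok W H h1 d1 c1 x y" "V1 = attach_cherry_V W d1 c1 x y"
      "E1 = attach_cherry_E H h1 d1 c1 x y"
    using reduction[OF e1 fr1 red1] unfolding h1_def by blast
  obtain d2 where D2: "att_ok W H h2 d2 c2 x y" "V2 = attach_cherry_V W d2 c2 x y"
      "E2 = attach_cherry_E H h2 d2 c2 x y"
    using reduction[OF e2 fr2 red2] unfolding h2_def by blast
  let ?L = "(X - {v, w}) \<union> {x, y}"
  have hiff: "h1 = h2 \<longleftrightarrow> (e1 = e2 \<or> (e1 \<in> {e\<in>E. z \<in> e} \<and> e2 \<in> {e\<in>E. z \<in> e}))"
  proof
    assume "h1 = h2"
    then show "e1 = e2 \<or> (e1 \<in> {e\<in>E. z \<in> e} \<and> e2 \<in> {e\<in>E. z \<in> e})"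
      using q12 e1(1) e2(1) unfolding h1_def h2_def by (auto split: if_splits)
  next
    assume "e1 = e2 \<or> (e1 \<in> {e\<in>E. z \<in> e} \<and> e2 \<in> {e\<in>E. z \<in> e})"
    then show "h1 = h2" unfolding h1_def h2_def by auto
  qed
  show ?thesis
  proof
    assume iso: "tree_iso ?L V1 E1 V2 E2"
    have "h1 = h2"
    proof (rule att_iso_only[OF D1(1) D2(1) finW brH nd2H connH])
      show "\<forall>l\<in>W. degree H l \<le> 1 \<longrightarrow> l \<in> ?L" using leavesH by auto
      show "?L \<subseteq> W \<union> {x, y}" by (rule LW)
      show "x \<in> ?L" "y \<in> ?L" by auto
      show "tree_iso ?L (attach_cherry_V W d1 c1 x y) (attach_cherry_E H h1 d1 c1 x y)
          (attach_cherry_V W d2 c2 x y) (attach_cherry_E H h2 d2 c2 x y)" using iso D1 D2 by simp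
    qed
    then show "e1 = e2 \<or> (e1 \<in> {e\<in>E. z \<in> e} \<and> e2 \<in> {e\<in>E. z \<in> e})" using hiff by simp
  next
    assume "e1 = e2 \<or> (e1 \<in> {e\<in>E. z \<in> e} \<and> e2 \<in> {e\<in>E. z \<in> e})"
    then have hh: "h1 = h2" using hiff by simp
    have "tree_iso ?L (attach_cherry_V W d1 c1 x y) (attach_cherry_E H h1 d1 c1 x y)
          (attach_cherry_V W d2 c2 x y) (attach_cherry_E H h1 d2 c2 x y)"
      by (rule att_iso_same[OF D1(1) _ LW]) (use D2(1) hh in simp)
    then show "tree_iso ?L V1 E1 V2 E2" using D1 D2 hh by simp
  qed
qed


end
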